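(* Let $\Phi$ be an $(s,d)$-product-sparse formula over the variables $Y\cup Z$, $Y=\{y_1,\dots,y_m\}$, $Z=\{z_1,\dots,z_m\}$, and let $v$ be a node of $\Phi$ with product-sparse depth $d(v)$. If $v$ is $k$-weak, then $\mathrm{maxrank}(M_v)\le 2^{s\cdot d(v)}\cdot|\Phi_v|\cdot 2^{b(v)-k/2}$.
   Context: $\mathbb{F}$ is a field. For $g\in\mathbb{F}[Y,Z]$, $M_g$ has rows indexed by monic multilinear monomials $p$ in $Y$ and columns by monic multilinear monomials $q$ in $Z$, with $M_g(p,q)=G$ iff $g=pq\,G+Q$ uniquely with $G$ containing only variables present in $p,q$ and $Q$ having no monomial divisible by $pq$ that contains only variables present in $p,q$; $\mathrm{maxrank}(M_g)=\max_{S:Y\cup Z\to\mathbb{F}}\mathrm{rank}(M_g|_S)$. $M_v$ denotes $M_g$ for the polynomial $g$ computed at $v$. A formula is a fan-in-2 arithmetic circuit (leaves labelled by variables or constants, internal plus/product gates) whose underlying graph is a tree. $\Phi_v$ is the subformula rooted at $v$ and $|\Phi_v|$ its number of gates; $X_v$ (resp. $Y_v$, $Z_v$) is the set of variables (resp. those in $Y$, in $Z$) appearing in $\Phi_v$. A product gate with children $v_1,v_2$ is disjoint if $X_{v_1}\cap X_{v_2}=\emptyset$ and $s$-sparse if the polynomial computed at one of $v_1,v_2$ has at most $2^s$ monomials. The product-sparse depth of $v$ is the maximum number of non-disjoint product gates on any path from a leaf to $v$. $\Phi$ is $(s,d)$-product-sparse if every product gate is disjoint or $s$-sparse, and $d$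 is the product-sparse depth of the root. Let $a(v)=\min\{|Y_v|,|Z_v|\}$ and $b(v)=(|Y_v|+|Z_v|)/2$. A node $v$ is $k$-unbalanced if $b(v)-a(v)\ge k$. A simple path $\gamma$ from a leaf to $v$ is $k$-unbalanced if it contains a $k$-unbalanced node, and central if for every edge from $u_1$ to $u$ on $\gamma$, $b(u)\le 2b(u_1)$. A node $v$ is $k$-weak if every central path reaching $v$ is $k$-unbalanced. *)

theory Defs
  imports "HOL-Library.Poly_Mapping" "Jordan_Normal_Form.DL_Rank"
begin

text \<open>Variables: Yv i stands for y_i, Zv i stands for z_i (indices 1..m).\<close>
datatype var = Yv nat | Zv nat

definition Yset :: "nat \<Rightarrow> var set" where "Yset m = Yv ` {1..m}"
definition Zset :: "nat \<Rightarrow> var set" where "Zset m = Zv ` {1..m}"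

text \<open>Polynomials in F[Y,Z]: finitely supported maps from monomials (exponent vectors)
  to coefficients; multiplication is convolution.\<close>
type_synonym 'a mpoly = "(var \<Rightarrow>\<^sub>0 nat) \<Rightarrow>\<^sub>0 'a"

definition pvar :: "var \<Rightarrow> 'a::{zero,one} mpoly" where
  "pvar x = Poly_Mapping.single (Poly_Mapping.single x 1) 1"

definition pconst :: "'a::zero \<Rightarrow> 'a mpoly" where
  "pconst c = Poly_Mapping.single 0 c"

definition peval :: "(var \<Rightarrow> 'a::comm_semiring_1) \<Rightarrow> 'a mpoly \<Rightarrow> 'a" where
  "peval S g = (\<Sum>\<mu>\<in>Poly_Mapping.keys g. Poly_Mapping.lookup g \<mu> * (\<Prod>x\<in>Poly_Mapping.keys \<mu>. S x ^ Poly_Mapping.lookup \<mu> x))"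

definition mlmono :: "var set \<Rightarrow> (var \<Rightarrow>\<^sub>0 nat)" where
  "mlmono A = (\<Sum>x\<in>A. Poly_Mapping.single x 1)"

datatype 'a formula = Var var | Cst 'a | Plus "'a formula" "'a formula" | Prod "'a formula" "'a formula"

fun fpoly :: "'a::comm_semiring_1 formula \<Rightarrow> 'a mpoly" where
  "fpoly (Var x) = pvar x"
| "fpoly (Cst c) = pconst c"
| "fpoly (Plus f g) = fpoly f + fpoly g"
| "fpoly (Prod f g) = fpoly f * fpoly g"

fun fvars :: "'a formula \<Rightarrow> var set" where
  "fvars (Var x) = {x}"
| "fvars (Cst c) = {}"
| "fvars (Plus f g) = fvars f \<union> fvars g"
| "fvars (Prod f g) = fvars f \<union> fvars g"

text \<open>Size |Phi_v|: number of gates, counting the leaves (input gates) as well.\<close>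
fun fsize :: "'a formula \<Rightarrow> nat" where
  "fsize (Var x) = 1"
| "fsize (Cst c) = 1"
| "fsize (Plus f g) = fsize f + fsize g + 1"
| "fsize (Prod f g) = fsize f + fsize g + 1"

text \<open>Nodes are addressed by positions: paths from the root (False = left child,
  True = right child).\<close>
fun positions :: "'a formula \<Rightarrow> bool list set" where
  "positions (Var x) = {[]}"
| "positions (Cst c) = {[]}"
| "positions (Plus f g) = insert [] ((Cons False) ` positions f \<union> (Cons True) ` positions g)"
| "positions (Prod f g) = insert [] ((Cons False) ` positions f \<union> (Cons True) ` positions g)"

fun subf :: "'a formula \<Rightarrow> bool list \<Rightarrow> 'a formula" where
  "subf f [] = f"
| "subf (Plus f g) (b # p) = (if b then subf g p else subf f p)"
| "subf (Prod f g) (b # p) = (if b then subf g p else subf f p)"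
| "subf f (b # p) = f"

fun is_leaf :: "'a formula \<Rightarrow> bool" where
  "is_leaf (Var x) = True"
| "is_leaf (Cst c) = True"
| "is_leaf _ = False"

text \<open>Positions of leaves; a (directed, leaf-to-root) path from a leaf at position q to the
  root consists of the nodes at positions take i q, i = length q, ..., 0.\<close>
definition leafpos :: "'a formula \<Rightarrow> bool list set" where
  "leafpos f = {q \<in> positions f. is_leaf (subf f q)}"

definition disjoint_prod :: "'a formula \<Rightarrow> bool" where
  "disjoint_prod f = (case f of Prod f1 f2 \<Rightarrow> fvars f1 \<inter> fvars f2 = {} | _ \<Rightarrow> False)"

definition nondisjoint_prod :: "'a formula \<Rightarrow> bool" where
  "nondisjoint_prod f = (case f of Prod f1 f2 \<Rightarrow> fvars f1 \<inter> fvars f2 \<noteq> {} | _ \<Rightarrow> False)"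

definition sparse_prod :: "nat \<Rightarrow> 'a::comm_semiring_1 formula \<Rightarrow> bool" where
  "sparse_prod s f = (case f of Prod f1 f2 \<Rightarrow>
      card (Poly_Mapping.keys (fpoly f1)) \<le> 2 ^ s \<or> card (Poly_Mapping.keys (fpoly f2)) \<le> 2 ^ s | _ \<Rightarrow> False)"

definition ps_depth :: "'a formula \<Rightarrow> nat" where
  "ps_depth f = Max ((\<lambda>q. card {i. i \<le> length q \<and> nondisjoint_prod (subf f (take i q))}) ` leafpos f)"

definition product_sparse :: "nat \<Rightarrow> nat \<Rightarrow> 'a::comm_semiring_1 formula \<Rightarrow> bool" where
  "product_sparse s d f =
     ((\<forall>p\<in>positions f. (\<exists>f1 f2. subf f p = Prod f1 f2) \<longrightarrow>
         disjoint_prod (subf f p) \<or> sparse_prod s (subf f p))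
      \<and> d = ps_depth f)"

definition aY :: "nat \<Rightarrow> 'a formula \<Rightarrow> real" where
  "aY m f = real (min (card (fvars f \<inter> Yset m)) (card (fvars f \<inter> Zset m)))"

definition bY :: "nat \<Rightarrow> 'a formula \<Rightarrow> real" where
  "bY m f = (real (card (fvars f \<inter> Yset m)) + real (card (fvars f \<inter> Zset m))) / 2"

definition unbalanced :: "nat \<Rightarrow> real \<Rightarrow> 'a formula \<Rightarrow> bool" where
  "unbalanced m k f = (bY m f - aY m f \<ge> k)"

text \<open>For a formula f (rooted at the node v) and a leaf position q of f: the path from
  that leaf up to v.\<close>
definition path_unbalanced :: "nat \<Rightarrow> real \<Rightarrow> 'a formula \<Rightarrow> bool list \<Rightarrow> bool" where
  "path_unbalanced m k f q = (\<exists>i\<le>length q. unbalanced m k (subf f (take i q)))"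

text \<open>Edge from child u1 = node at take (Suc i) q to parent u = node at take i q.\<close>
definition path_central :: "nat \<Rightarrow> 'a formula \<Rightarrow> bool list \<Rightarrow> bool" where
  "path_central m f q = (\<forall>i<length q. bY m (subf f (take i q)) \<le> 2 * bY m (subf f (take (Suc i) q)))"

definition weak :: "nat \<Rightarrow> real \<Rightarrow> 'a formula \<Rightarrow> bool" where
  "weak m k f = (\<forall>q\<in>leafpos f. path_central m f q \<longrightarrow> path_unbalanced m k f q)"

text \<open>Entry M_g(p,q) for multilinear monomials given by sets p (of Y-variables) and q
  (of Z-variables): the unique G with g = pq G + Q as in the paper.\<close>
definition Mentry :: "'a::comm_semiring_1 mpoly \<Rightarrow> var set \<Rightarrow> var set \<Rightarrow> 'a mpoly" where
  "Mentry g p q = (THE G. (\<forall>\<mu>\<in>Poly_Mapping.keys G. Poly_Mapping.keys \<mu> \<subseteq> p \<union> q) \<and>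
      (\<exists>Q. g = Poly_Mapping.single (mlmono (p \<union> q)) 1 * G + Q \<and>
           (\<forall>\<mu>\<in>Poly_Mapping.keys Q. \<not> ((\<exists>\<nu>. \<mu> = mlmono (p \<union> q) + \<nu>) \<and> Poly_Mapping.keys \<mu> \<subseteq> p \<union> q))))"

text \<open>Enumeration of the multilinear monomials in Y (resp. Z) by numbers below 2^m
  (bit j of the index says whether y_(j+1) (resp. z_(j+1)) occurs).\<close>
definition Ysub :: "nat \<Rightarrow> nat \<Rightarrow> var set" where
  "Ysub m i = {Yv (Suc j) | j. j < m \<and> bit i j}"
definition Zsub :: "nat \<Rightarrow> nat \<Rightarrow> var set" where
  "Zsub m i = {Zv (Suc j) | j. j < m \<and> bit i j}"

definition Mmat_eval :: "nat \<Rightarrow> 'a::field mpoly \<Rightarrow> (var \<Rightarrow> 'a) \<Rightarrow> 'a mat" where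
  "Mmat_eval m g S = mat (2 ^ m) (2 ^ m) (\<lambda>(i, j). peval S (Mentry g (Ysub m i) (Zsub m j)))"

definition maxrank :: "nat \<Rightarrow> 'a::field mpoly \<Rightarrow> nat" where
  "maxrank m g = Max (range (\<lambda>S. vec_space.rank (2 ^ m) (Mmat_eval m g S)))"

end

theory Submission
  imports Defs "HOL-Library.Nat_Bijection"
begin


lemma rank_sum_rank1:
  fixes u w :: "nat \<Rightarrow> nat \<Rightarrow> 'a::field"
  assumes "finite I"
  shows "vec_space.rank n (mat n nc (\<lambda>(i,j). \<Sum>t\<in>I. u t i * w t j)) \<le> card I"
  using assms
proof (induction I rule: finite_induct)
  case empty
  have "mat n nc (\<lambda>(i,j). \<Sum>t\<in>{}. u t i * w t j) = (0\<^sub>m n nc :: 'a mat)"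
    by (rule eq_matI) auto
  then show ?case by (metis vec_space.rank_0I order_refl card.empty)
next
  case (insert a F)
  have eq: "mat n nc (\<lambda>(i,j). \<Sum>t\<in>insert a F. u t i * w t j)
      = mat n nc (\<lambda>(i,j). u a i * w a j) + mat n nc (\<lambda>(i,j). \<Sum>t\<in>F. u t i * w t j)"
    by (rule eq_matI) (use insert in auto)
  have "vec_space.rank n (mat n nc (\<lambda>(i,j). \<Sum>t\<in>insert a F. u t i * w t j))
     \<le> vec_space.rank n (mat n nc (\<lambda>(i,j). u a i * w a j)) + vec_space.rank n (mat n nc (\<lambda>(i,j). \<Sum>t\<in>F. u t i * w t j))"
    unfolding eq by (rule vec_space.rank_subadditive) auto
  moreover have "vec_space.rank n (mat n nc (\<lambda>(i,j). u a i * w a j)) \<le> 1"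
    by (rule vec_space.rank_le_1_product_entries[where f="u a" and g="w a"]) auto
  ultimately show ?case using insert by simp
qed



definition phi :: "(var \<Rightarrow> 'a::comm_semiring_1) \<Rightarrow> var set \<Rightarrow> (var \<Rightarrow>\<^sub>0 nat) \<Rightarrow> 'a" where
  "phi S T \<mu> = (if Poly_Mapping.keys \<mu> = T then (\<Prod>x\<in>T. S x ^ (Poly_Mapping.lookup \<mu> x - 1)) else 0)"

definition Lin :: "((var \<Rightarrow>\<^sub>0 nat) \<Rightarrow> 'a::comm_semiring_1) \<Rightarrow> 'a mpoly \<Rightarrow> 'a" where
  "Lin \<phi> g = (\<Sum>\<mu>\<in>Poly_Mapping.keys g. Poly_Mapping.lookup g \<mu> * \<phi> \<mu>)"

definition EE :: "(var \<Rightarrow> 'a::comm_semiring_1) \<Rightarrow> 'a mpoly \<Rightarrow> var set \<Rightarrow> 'a" where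
  "EE S g T = Lin (phi S T) g"

lemma Lin_superset:
  assumes "finite K" "Poly_Mapping.keys g \<subseteq> K"
  shows "Lin \<phi> g = (\<Sum>\<mu>\<in>K. Poly_Mapping.lookup g \<mu> * \<phi> \<mu>)"
  unfolding Lin_def
  by (rule sum.mono_neutral_left) (use assms in \<open>auto simp: in_keys_iff\<close>)

lemma Lin_add: "Lin \<phi> (g + h) = Lin \<phi> g + Lin \<phi> h"
proof -
  let ?K = "Poly_Mapping.keys g \<union> Poly_Mapping.keys h"
  have "Lin \<phi> (g + h) = (\<Sum>\<mu>\<in>?K. Poly_Mapping.lookup (g+h) \<mu> * \<phi> \<mu>)"
    by (rule Lin_superset) (auto simp: keys_add)
  also have "\<dots> = (\<Sum>\<mu>\<in>?K. Poly_Mapping.lookup g \<mu> * \<phi> \<mu>) + (\<Sum>\<mu>\<in>?K. Poly_Mapping.lookup h \<mu> * \<phi> \<mu>)"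
    by (simp add: lookup_add distrib_right sum.distrib)
  also have "\<dots> = Lin \<phi> g + Lin \<phi> h"
    by (simp add: Lin_superset[symmetric])
  finally show ?thesis .
qed

lemma Lin_zero[simp]: "Lin \<phi> 0 = 0" by (simp add: Lin_def)

lemma Lin_sum: "Lin \<phi> (\<Sum>i\<in>I. g i) = (\<Sum>i\<in>I. Lin \<phi> (g i))"
  by (induction I rule: infinite_finite_induct) (auto simp: Lin_add)

lemma Lin_single: "Lin \<phi> (Poly_Mapping.single \<mu> c) = c * \<phi> \<mu>"
  by (simp add: Lin_def)

lemma poly_expand: "g = (\<Sum>\<mu>\<in>Poly_Mapping.keys g. Poly_Mapping.single \<mu> (Poly_Mapping.lookup g \<mu>))"
  by (rule poly_mapping_eqI)
     (auto simp: lookup_sum lookup_single when_def in_keys_iff intro: sum.neutral)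

lemma Lin_mult:
  fixes g h :: "'a::comm_semiring_1 mpoly"
  shows "Lin \<phi> (g * h) = (\<Sum>\<mu>\<in>Poly_Mapping.keys g. \<Sum>\<nu>\<in>Poly_Mapping.keys h.
      Poly_Mapping.lookup g \<mu> * Poly_Mapping.lookup h \<nu> * \<phi> (\<mu> + \<nu>))"
proof -
  have "g * h = (\<Sum>\<mu>\<in>Poly_Mapping.keys g. Poly_Mapping.single \<mu> (Poly_Mapping.lookup g \<mu>))
     * (\<Sum>\<nu>\<in>Poly_Mapping.keys h. Poly_Mapping.single \<nu> (Poly_Mapping.lookup h \<nu>))"
    using poly_expand[of g] poly_expand[of h] by simp
  also have "\<dots> = (\<Sum>\<mu>\<in>Poly_Mapping.keys g. \<Sum>\<nu>\<in>Poly_Mapping.keys h.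
      Poly_Mapping.single (\<mu> + \<nu>) (Poly_Mapping.lookup g \<mu> * Poly_Mapping.lookup h \<nu>))"
    by (simp add: sum_product mult_single)
  finally show ?thesis by (simp add: Lin_sum Lin_single)
qed

lemma keys_add_nat: "Poly_Mapping.keys ((\<mu>::var \<Rightarrow>\<^sub>0 nat) + \<nu>) = Poly_Mapping.keys \<mu> \<union> Poly_Mapping.keys \<nu>"
  by (auto simp: in_keys_iff lookup_add)

lemma phi_var:
  "phi S T (Poly_Mapping.single x 1 + \<nu>) =
     (if x \<in> T then S x * phi S T \<nu> + phi S (T - {x}) \<nu> else 0)"
proof (cases "x \<in> T")
  case False
  then show ?thesis by (auto simp: phi_def keys_add_nat)
next
  case xT: True
  show ?thesis
  proof (cases "x \<in> Poly_Mapping.keys \<nu>")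
    case True
    then have k: "Poly_Mapping.keys (Poly_Mapping.single x 1 + \<nu>) = Poly_Mapping.keys \<nu>"
      by (auto simp: keys_add_nat)
    have "phi S (T - {x}) \<nu> = 0" using True by (auto simp: phi_def)
    moreover have "phi S T (Poly_Mapping.single x 1 + \<nu>) = S x * phi S T \<nu>"
    proof (cases "Poly_Mapping.keys \<nu> = T")
      case True
      have fin: "finite T" using True by auto
      have "(\<Prod>y\<in>T. S y ^ (Poly_Mapping.lookup (Poly_Mapping.single x 1 + \<nu>) y - 1))
          = S x ^ (Poly_Mapping.lookup (Poly_Mapping.single x 1 + \<nu>) x - 1) *
            (\<Prod>y\<in>T-{x}. S y ^ (Poly_Mapping.lookup (Poly_Mapping.single x 1 + \<nu>) y - 1))"
        using fin xT by (simp add: prod.remove)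
      also have "\<dots> = S x * S x ^ (Poly_Mapping.lookup \<nu> x - 1) *
            (\<Prod>y\<in>T-{x}. S y ^ (Poly_Mapping.lookup \<nu> y - 1))"
      proof -
        have "Poly_Mapping.lookup \<nu> x \<ge> 1" using xT True by (auto simp: in_keys_iff)
        then have "Poly_Mapping.lookup (Poly_Mapping.single x 1 + \<nu>) x - 1 = Suc (Poly_Mapping.lookup \<nu> x - 1)"
          by (simp add: lookup_add)
        moreover have "(\<Prod>y\<in>T-{x}. S y ^ (Poly_Mapping.lookup (Poly_Mapping.single x 1 + \<nu>) y - 1))
           = (\<Prod>y\<in>T-{x}. S y ^ (Poly_Mapping.lookup \<nu> y - 1))"
          by (rule prod.cong) (auto simp: lookup_add lookup_single)
        ultimately show ?thesis by simp
      qed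
      also have "\<dots> = S x * (\<Prod>y\<in>T. S y ^ (Poly_Mapping.lookup \<nu> y - 1))"
        using fin xT by (simp add: prod.remove mult.assoc)
      finally show ?thesis using True k by (simp add: phi_def)
    next
      case False
      then show ?thesis using k by (simp add: phi_def)
    qed
    ultimately show ?thesis using xT by simp
  next
    case nk: False
    then have k: "Poly_Mapping.keys (Poly_Mapping.single x 1 + \<nu>) = insert x (Poly_Mapping.keys \<nu>)"
      by (auto simp: keys_add_nat)
    have "phi S T \<nu> = 0" using nk xT by (auto simp: phi_def)
    moreover have "phi S T (Poly_Mapping.single x 1 + \<nu>) = phi S (T - {x}) \<nu>"
    proof (cases "Poly_Mapping.keys \<nu> = T - {x}")
      case True
      then have kT: "Poly_Mapping.keys (Poly_Mapping.single x 1 + \<nu>) = T" using k xT by auto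
      have fin: "finite T" using kT[symmetric] by simp
      have "(\<Prod>y\<in>T. S y ^ (Poly_Mapping.lookup (Poly_Mapping.single x 1 + \<nu>) y - 1))
          = S x ^ (Poly_Mapping.lookup (Poly_Mapping.single x 1 + \<nu>) x - 1) *
            (\<Prod>y\<in>T-{x}. S y ^ (Poly_Mapping.lookup (Poly_Mapping.single x 1 + \<nu>) y - 1))"
        using fin xT by (simp add: prod.remove)
      also have "\<dots> = (\<Prod>y\<in>T-{x}. S y ^ (Poly_Mapping.lookup \<nu> y - 1))"
      proof -
        have "Poly_Mapping.lookup \<nu> x = 0" using nk by (simp add: in_keys_iff)
        moreover have "(\<Prod>y\<in>T-{x}. S y ^ (Poly_Mapping.lookup (Poly_Mapping.single x 1 + \<nu>) y - 1))
           = (\<Prod>y\<in>T-{x}. S y ^ (Poly_Mapping.lookup \<nu> y - 1))"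
          by (rule prod.cong) (auto simp: lookup_add lookup_single)
        ultimately show ?thesis by (simp add: lookup_add)
      qed
      finally show ?thesis using True kT by (simp add: phi_def)
    next
      case False
      then have "Poly_Mapping.keys (Poly_Mapping.single x 1 + \<nu>) \<noteq> T" using k xT nk by auto
      then show ?thesis using False by (simp add: phi_def)
    qed
    ultimately show ?thesis using xT by simp
  qed
qed

lemma phi_disj:
  assumes "Poly_Mapping.keys \<mu>1 \<subseteq> X1" "Poly_Mapping.keys \<mu>2 \<subseteq> X2" "X1 \<inter> X2 = {}"
  shows "phi S T (\<mu>1 + \<mu>2) = (if T \<subseteq> X1 \<union> X2 then phi S (T \<inter> X1) \<mu>1 * phi S (T \<inter> X2) \<mu>2 else 0)"
proof -
  have k: "Poly_Mapping.keys (\<mu>1 + \<mu>2) = Poly_Mapping.keys \<mu>1 \<union> Poly_Mapping.keys \<mu>2"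
    by (rule keys_add_nat)
  show ?thesis
  proof (cases "T \<subseteq> X1 \<union> X2")
    case False
    then show ?thesis using k assms by (auto simp: phi_def)
  next
    case TX: True
    show ?thesis
    proof (cases "Poly_Mapping.keys \<mu>1 = T \<inter> X1 \<and> Poly_Mapping.keys \<mu>2 = T \<inter> X2")
      case True
      then have kT: "Poly_Mapping.keys (\<mu>1 + \<mu>2) = T" using k TX by auto
      have fin: "finite T" using kT[symmetric] by simp
      have T: "T = (T \<inter> X1) \<union> (T \<inter> X2)" using TX by auto
      have "(\<Prod>y\<in>T. S y ^ (Poly_Mapping.lookup (\<mu>1 + \<mu>2) y - 1))
         = (\<Prod>y\<in>T \<inter> X1. S y ^ (Poly_Mapping.lookup (\<mu>1 + \<mu>2) y - 1)) *
           (\<Prod>y\<in>T \<inter> X2. S y ^ (Poly_Mapping.lookup (\<mu>1 + \<mu>2) y - 1))"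
        using fin assms(3) by (subst T, subst prod.union_disjoint) auto
      also have "\<dots> = (\<Prod>y\<in>T \<inter> X1. S y ^ (Poly_Mapping.lookup \<mu>1 y - 1)) *
           (\<Prod>y\<in>T \<inter> X2. S y ^ (Poly_Mapping.lookup \<mu>2 y - 1))"
      proof -
        have "\<And>y. y \<in> X1 \<Longrightarrow> Poly_Mapping.lookup \<mu>2 y = 0" using assms by (auto simp: in_keys_iff)
        moreover have "\<And>y. y \<in> X2 \<Longrightarrow> Poly_Mapping.lookup \<mu>1 y = 0" using assms by (auto simp: in_keys_iff)
        ultimately show ?thesis by (simp add: lookup_add)
      qed
      finally show ?thesis using True kT TX by (simp add: phi_def)
    next
      case False
      then have "Poly_Mapping.keys (\<mu>1 + \<mu>2) \<noteq> T" using k assms TX by auto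
      then show ?thesis using False by (auto simp: phi_def)
    qed
  qed
qed



lemma keys_pvar: "Poly_Mapping.keys (pvar x :: 'a::field mpoly) = {Poly_Mapping.single x 1}"
  by (simp add: pvar_def)

lemma EE_add: "EE S (g + h) T = EE S g T + EE S h T"
  by (simp add: EE_def Lin_add)

lemma EE_zero[simp]: "EE S 0 T = 0"
  by (simp add: EE_def)

lemma EE_var_mult:
  fixes g :: "'a::field mpoly"
  shows "EE S (pvar x * g) T = (if x \<in> T then S x * EE S g T + EE S g (T - {x}) else 0)"
  unfolding EE_def Lin_mult keys_pvar
  apply (simp add: pvar_def phi_var del: One_nat_def)
  apply (simp add: Lin_def sum_distrib_left sum.distrib algebra_simps)
  done

lemma EE_const_mult:
  fixes g :: "'a::field mpoly"
  shows "EE S (pconst c * g) T = c * EE S g T"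
  unfolding EE_def Lin_mult
  by (cases "c = 0") (simp_all add: pconst_def Lin_def sum_distrib_left algebra_simps)

lemma EE_single_mult:
  fixes g :: "'a::field mpoly"
  shows "EE S (g1 * g) T = (\<Sum>\<mu>\<in>Poly_Mapping.keys g1. Poly_Mapping.lookup g1 \<mu> * EE S (Poly_Mapping.single \<mu> 1 * g) T)"
  unfolding EE_def Lin_mult
  by (simp add: sum_distrib_left algebra_simps)

lemma EE_disj:
  fixes g h :: "'a::field mpoly"
  assumes "\<forall>\<mu>\<in>Poly_Mapping.keys g. Poly_Mapping.keys \<mu> \<subseteq> X1"
    "\<forall>\<mu>\<in>Poly_Mapping.keys h. Poly_Mapping.keys \<mu> \<subseteq> X2" "X1 \<inter> X2 = {}"
  shows "EE S (g * h) T = (if T \<subseteq> X1 \<union> X2 then EE S g (T \<inter> X1) * EE S h (T \<inter> X2) else 0)"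
proof -
  have "EE S (g * h) T = (\<Sum>\<mu>\<in>Poly_Mapping.keys g. \<Sum>\<nu>\<in>Poly_Mapping.keys h.
      Poly_Mapping.lookup g \<mu> * Poly_Mapping.lookup h \<nu> *
      (if T \<subseteq> X1 \<union> X2 then phi S (T \<inter> X1) \<mu> * phi S (T \<inter> X2) \<nu> else 0))"
    unfolding EE_def Lin_mult
    by (intro sum.cong refl) (simp add: phi_disj assms)
  also have "\<dots> = (if T \<subseteq> X1 \<union> X2 then EE S g (T \<inter> X1) * EE S h (T \<inter> X2) else 0)"
    by (simp add: EE_def Lin_def sum_product algebra_simps)
  finally show ?thesis .
qed

lemma EE_support:
  assumes "\<forall>\<mu>\<in>Poly_Mapping.keys g. Poly_Mapping.keys \<mu> \<subseteq> V" "\<not> T \<subseteq> V"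
  shows "EE S g T = 0"
  unfolding EE_def Lin_def
  by (rule sum.neutral) (use assms in \<open>auto simp: phi_def\<close>)

definition isY :: "var set \<Rightarrow> bool" where "isY p = (\<forall>x\<in>p. \<exists>i. x = Yv i)"
definition isZ :: "var set \<Rightarrow> bool" where "isZ p = (\<forall>x\<in>p. \<exists>i. x = Zv i)"

definition dec :: "(var set \<Rightarrow> 'a::comm_semiring_1) \<Rightarrow> nat \<Rightarrow> bool" where
  "dec F r = (\<exists>(I::nat set) u w. finite I \<and> card I \<le> r \<and>
      (\<forall>p q. isY p \<longrightarrow> isZ q \<longrightarrow> F (p \<union> q) = (\<Sum>i\<in>I. u i p * w i q)))"

lemma dec_mono:
  assumes "dec F r" "r \<le> r'" shows "dec F r'"
proof -
  obtain I :: "nat set" and u w where "finite I" "card I \<le> r"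
    "\<forall>p q. isY p \<longrightarrow> isZ q \<longrightarrow> F (p \<union> q) = (\<Sum>i\<in>I. u i p * w i q)"
    using assms(1) unfolding dec_def by blast
  moreover have "card I \<le> r'" using calculation(2) assms(2) by linarith
  ultimately show ?thesis unfolding dec_def by blast
qed

lemma dec_zero: "dec (\<lambda>T. 0) 0"
  unfolding dec_def by (rule exI[of _ "{}"]) auto

lemma dec_cong:
  assumes "dec F r" "\<And>T. F T = G T" shows "dec G r"
proof -
  have "F = G" using assms(2) by (rule ext)
  then show ?thesis using assms(1) by simp
qed

lemma dec_scale: "dec F r \<Longrightarrow> dec (\<lambda>T. c * F T) r"
  unfolding dec_def
  apply clarify
  subgoal for I u w
    by (rule exI[of _ I], rule exI[of _ "\<lambda>i p. c * u i p"], rule exI[of _ w])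
       (auto simp: sum_distrib_left algebra_simps)
  done

lemma dec_add:
  assumes "dec F r1" "dec G r2"
  shows "dec (\<lambda>T. F T + G T) (r1 + r2)"
proof -
  obtain I1 :: "nat set" and u1 w1 where 1: "finite I1" "card I1 \<le> r1"
    "\<forall>p q. isY p \<longrightarrow> isZ q \<longrightarrow> F (p \<union> q) = (\<Sum>i\<in>I1. u1 i p * w1 i q)"
    using assms(1) unfolding dec_def by blast
  obtain I2 :: "nat set" and u2 w2 where 2: "finite I2" "card I2 \<le> r2"
    "\<forall>p q. isY p \<longrightarrow> isZ q \<longrightarrow> G (p \<union> q) = (\<Sum>i\<in>I2. u2 i p * w2 i q)"
    using assms(2) unfolding dec_def by blast
  define I where "I = (\<lambda>i. 2*i) ` I1 \<union> (\<lambda>i. Suc (2*i)) ` I2"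
  define u where "u = (\<lambda>i p. if even i then u1 (i div 2) p else u2 (i div 2) p)"
  define w where "w = (\<lambda>i q. if even i then w1 (i div 2) q else w2 (i div 2) q)"
  have disj: "(\<lambda>i. 2*i) ` I1 \<inter> (\<lambda>i. Suc (2*i)) ` I2 = {}" by auto presburger
  have inj1: "inj_on (\<lambda>i::nat. 2*i) I1" by (auto simp: inj_on_def)
  have inj2: "inj_on (\<lambda>i::nat. Suc (2*i)) I2" by (auto simp: inj_on_def)
  have "finite I" using 1 2 by (simp add: I_def)
  moreover have "card I \<le> r1 + r2"
    using 1 2 card_Un_le[of "(\<lambda>i. 2*i) ` I1" "(\<lambda>i. Suc (2*i)) ` I2"] card_image_le[OF 1(1), of "\<lambda>i. 2*i"]
      card_image_le[OF 2(1), of "\<lambda>i. Suc (2*i)"] unfolding I_def by linarith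
  moreover have "\<forall>p q. isY p \<longrightarrow> isZ q \<longrightarrow> F (p \<union> q) + G (p \<union> q) = (\<Sum>i\<in>I. u i p * w i q)"
  proof (intro allI impI)
    fix p q assume pq: "isY p" "isZ q"
    have "(\<Sum>i\<in>I. u i p * w i q) = (\<Sum>i\<in>(\<lambda>i. 2*i) ` I1. u i p * w i q) + (\<Sum>i\<in>(\<lambda>i. Suc (2*i)) ` I2. u i p * w i q)"
      unfolding I_def using 1 2 disj by (simp add: sum.union_disjoint)
    also have "\<dots> = (\<Sum>i\<in>I1. u1 i p * w1 i q) + (\<Sum>i\<in>I2. u2 i p * w2 i q)"
      by (simp add: sum.reindex[OF inj1] sum.reindex[OF inj2] u_def w_def)
    finally show "F (p \<union> q) + G (p \<union> q) = (\<Sum>i\<in>I. u i p * w i q)" using 1 2 pq by simp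
  qed
  ultimately show ?thesis unfolding dec_def by blast
qed

lemma dec_sum:
  assumes "finite K" "\<And>\<mu>. \<mu> \<in> K \<Longrightarrow> dec (G \<mu>) r"
  shows "dec (\<lambda>T. \<Sum>\<mu>\<in>K. c \<mu> * G \<mu> T) (card K * r)"
  using assms
proof (induction K rule: finite_induct)
  case empty
  then show ?case using dec_zero by simp
next
  case (insert a F)
  have "dec (\<lambda>T. c a * G a T + (\<Sum>\<mu>\<in>F. c \<mu> * G \<mu> T)) (r + card F * r)"
    by (rule dec_add) (use insert dec_scale in auto)
  then show ?case using insert by simp
qed

lemma dec_var:
  assumes "dec F r"
  shows "dec (\<lambda>T. if x \<in> T then S x * F T + F (T - {x}) else 0) r"
proof -
  obtain I :: "nat set" and u w where 1: "finite I" "card I \<le> r"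
    "\<forall>p q. isY p \<longrightarrow> isZ q \<longrightarrow> F (p \<union> q) = (\<Sum>i\<in>I. u i p * w i q)"
    using assms(1) unfolding dec_def by blast
  show ?thesis
  proof (cases x)
    case (Yv j)
    define u' where "u' = (\<lambda>i p. if x \<in> p then S x * u i p + u i (p - {x}) else 0)"
    have "\<forall>p q. isY p \<longrightarrow> isZ q \<longrightarrow> (if x \<in> p \<union> q then S x * F (p \<union> q) + F (p \<union> q - {x}) else 0)
       = (\<Sum>i\<in>I. u' i p * w i q)"
    proof (intro allI impI)
      fix p q assume pq: "isY p" "isZ q"
      have xq: "x \<notin> q" using pq Yv by (auto simp: isZ_def)
      have e: "p \<union> q - {x} = (p - {x}) \<union> q" using xq by auto
      have y: "isY (p - {x})" using pq by (auto simp: isY_def)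
      show "(if x \<in> p \<union> q then S x * F (p \<union> q) + F (p \<union> q - {x}) else 0) = (\<Sum>i\<in>I. u' i p * w i q)"
        using xq 1(3) pq y unfolding e u'_def
        by (auto simp: sum_distrib_left sum.distrib algebra_simps)
    qed
    then show ?thesis using 1 unfolding dec_def by blast
  next
    case (Zv j)
    define w' where "w' = (\<lambda>i q. if x \<in> q then S x * w i q + w i (q - {x}) else 0)"
    have "\<forall>p q. isY p \<longrightarrow> isZ q \<longrightarrow> (if x \<in> p \<union> q then S x * F (p \<union> q) + F (p \<union> q - {x}) else 0)
       = (\<Sum>i\<in>I. u i p * w' i q)"
    proof (intro allI impI)
      fix p q assume pq: "isY p" "isZ q"
      have xp: "x \<notin> p" using pq Zv by (auto simp: isY_def)
      have e: "p \<union> q - {x} = p \<union> (q - {x})" using xp by auto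
      have z: "isZ (q - {x})" using pq by (auto simp: isZ_def)
      show "(if x \<in> p \<union> q then S x * F (p \<union> q) + F (p \<union> q - {x}) else 0) = (\<Sum>i\<in>I. u i p * w' i q)"
        using xp 1(3) pq z unfolding e w'_def
        by (auto simp: sum_distrib_left sum.distrib algebra_simps)
    qed
    then show ?thesis using 1 unfolding dec_def by blast
  qed
qed



lemma dec_disj:
  assumes "dec F1 r1" "dec F2 r2"
  shows "dec (\<lambda>T. if T \<subseteq> X1 \<union> X2 then F1 (T \<inter> X1) * F2 (T \<inter> X2) else 0) (r1 * r2)"
proof -
  obtain I1 :: "nat set" and u1 w1 where 1: "finite I1" "card I1 \<le> r1"
    "\<forall>p q. isY p \<longrightarrow> isZ q \<longrightarrow> F1 (p \<union> q) = (\<Sum>i\<in>I1. u1 i p * w1 i q)"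
    using assms(1) unfolding dec_def by blast
  obtain I2 :: "nat set" and u2 w2 where 2: "finite I2" "card I2 \<le> r2"
    "\<forall>p q. isY p \<longrightarrow> isZ q \<longrightarrow> F2 (p \<union> q) = (\<Sum>i\<in>I2. u2 i p * w2 i q)"
    using assms(2) unfolding dec_def by blast
  define I where "I = prod_encode ` (I1 \<times> I2)"
  define u where "u = (\<lambda>n p. if p \<subseteq> X1 \<union> X2 then u1 (fst (prod_decode n)) (p \<inter> X1) * u2 (snd (prod_decode n)) (p \<inter> X2) else 0)"
  define w where "w = (\<lambda>n q. if q \<subseteq> X1 \<union> X2 then w1 (fst (prod_decode n)) (q \<inter> X1) * w2 (snd (prod_decode n)) (q \<inter> X2) else 0)"
  have "finite I" using 1 2 by (simp add: I_def)
  moreover have "card I \<le> r1 * r2"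
    unfolding I_def using 1 2 by (simp add: card_image inj_prod_encode card_cartesian_product mult_le_mono)
  moreover have "\<forall>p q. isY p \<longrightarrow> isZ q \<longrightarrow> (if p \<union> q \<subseteq> X1 \<union> X2 then F1 ((p \<union> q) \<inter> X1) * F2 ((p \<union> q) \<inter> X2) else 0)
      = (\<Sum>i\<in>I. u i p * w i q)"
  proof (intro allI impI)
    fix p q assume pq: "isY p" "isZ q"
    have y: "isY (p \<inter> X)" for X using pq by (auto simp: isY_def)
    have z: "isZ (q \<inter> X)" for X using pq by (auto simp: isZ_def)
    have e: "(p \<union> q) \<inter> X = (p \<inter> X) \<union> (q \<inter> X)" for X by auto
    have "(\<Sum>i\<in>I. u i p * w i q) = (\<Sum>ij\<in>I1 \<times> I2. u (prod_encode ij) p * w (prod_encode ij) q)"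
      unfolding I_def by (simp add: sum.reindex inj_prod_encode)
    also have "\<dots> = (if p \<union> q \<subseteq> X1 \<union> X2 then
        (\<Sum>i\<in>I1. u1 i (p \<inter> X1) * w1 i (q \<inter> X1)) * (\<Sum>j\<in>I2. u2 j (p \<inter> X2) * w2 j (q \<inter> X2)) else 0)"
      by (simp add: u_def w_def sum_product sum.cartesian_product split_def algebra_simps)
    also have "\<dots> = (if p \<union> q \<subseteq> X1 \<union> X2 then F1 ((p \<union> q) \<inter> X1) * F2 ((p \<union> q) \<inter> X2) else 0)"
      using 1(3) 2(3) y z unfolding e by simp
    finally show "(if p \<union> q \<subseteq> X1 \<union> X2 then F1 ((p \<union> q) \<inter> X1) * F2 ((p \<union> q) \<inter> X2) else 0)
      = (\<Sum>i\<in>I. u i p * w i q)" by simp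
  qed
  ultimately show ?thesis unfolding dec_def by blast
qed

lemma dec_trivY:
  assumes "\<And>T. \<not> T \<subseteq> V \<Longrightarrow> F T = 0" "V \<inter> {x. \<exists>i. x = Yv i} \<subseteq> A" "finite A"
  shows "dec F (2 ^ card A)"
proof -
  have fP: "finite (Pow A)" using assms(3) by simp
  obtain f where f: "bij_betw f {0..<card (Pow A)} (Pow A)"
    using ex_bij_betw_nat_finite[OF fP] by blast
  define u where "u = (\<lambda>i (p::var set). if p = f i then (1::'a) else 0)"
  define w where "w = (\<lambda>i q. F (f i \<union> q))"
  have "\<forall>p q. isY p \<longrightarrow> isZ q \<longrightarrow> F (p \<union> q) = (\<Sum>i\<in>{0..<card (Pow A)}. u i p * w i q)"
  proof (intro allI impI)
    fix p q assume pq: "isY p" "isZ q"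
    have "(\<Sum>i\<in>{0..<card (Pow A)}. u i p * w i q) = (\<Sum>P\<in>Pow A. (if p = P then 1 else 0) * F (P \<union> q))"
      unfolding u_def w_def by (rule sum.reindex_bij_betw[OF f])
    also have "\<dots> = (\<Sum>P\<in>Pow A. if p = P then F (p \<union> q) else 0)"
      by (rule sum.cong) auto
    also have "\<dots> = (if p \<in> Pow A then F (p \<union> q) else 0)"
      using fP by (simp add: sum.delta)
    also have "\<dots> = F (p \<union> q)"
    proof (cases "p \<subseteq> A")
      case False
      then have "\<not> p \<subseteq> V" using assms(2) pq by (auto simp: isY_def)
      then show ?thesis using assms(1) False by auto
    qed simp
    finally show "F (p \<union> q) = (\<Sum>i\<in>{0..<card (Pow A)}. u i p * w i q)" by simp
  qed
  then show ?thesis unfolding dec_def using assms(3)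
    by (intro exI[of _ "{0..<card (Pow A)}"]) (auto simp: card_Pow)
qed

lemma dec_trivZ:
  assumes "\<And>T. \<not> T \<subseteq> V \<Longrightarrow> F T = 0" "V \<inter> {x. \<exists>i. x = Zv i} \<subseteq> A" "finite A"
  shows "dec F (2 ^ card A)"
proof -
  have fP: "finite (Pow A)" using assms(3) by simp
  obtain f where f: "bij_betw f {0..<card (Pow A)} (Pow A)"
    using ex_bij_betw_nat_finite[OF fP] by blast
  define w where "w = (\<lambda>i (q::var set). if q = f i then (1::'a) else 0)"
  define u where "u = (\<lambda>i p. F (p \<union> f i))"
  have "\<forall>p q. isY p \<longrightarrow> isZ q \<longrightarrow> F (p \<union> q) = (\<Sum>i\<in>{0..<card (Pow A)}. u i p * w i q)"
  proof (intro allI impI)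
    fix p q assume pq: "isY p" "isZ q"
    have "(\<Sum>i\<in>{0..<card (Pow A)}. u i p * w i q) = (\<Sum>P\<in>Pow A. F (p \<union> P) * (if q = P then 1 else 0))"
      unfolding u_def w_def by (rule sum.reindex_bij_betw[OF f])
    also have "\<dots> = (\<Sum>P\<in>Pow A. if q = P then F (p \<union> q) else 0)"
      by (rule sum.cong) auto
    also have "\<dots> = (if q \<in> Pow A then F (p \<union> q) else 0)"
      using fP by (simp add: sum.delta)
    also have "\<dots> = F (p \<union> q)"
    proof (cases "q \<subseteq> A")
      case False
      then have "\<not> q \<subseteq> V" using assms(2) pq by (auto simp: isZ_def)
      then show ?thesis using assms(1) False by auto
    qed simp
    finally show "F (p \<union> q) = (\<Sum>i\<in>{0..<card (Pow A)}. u i p * w i q)" by simp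
  qed
  then show ?thesis unfolding dec_def using assms(3)
    by (intro exI[of _ "{0..<card (Pow A)}"]) (auto simp: card_Pow)
qed

lemma dec_single_pow:
  fixes h :: "'a::field mpoly"
  assumes "dec (EE S h) r"
  shows "dec (EE S (Poly_Mapping.single (Poly_Mapping.single a n) 1 * h)) r"
proof (induction n)
  case 0
  then show ?case using assms by simp
next
  case (Suc n)
  have e: "Poly_Mapping.single (Poly_Mapping.single a (Suc n)) (1::'a) =
      pvar a * Poly_Mapping.single (Poly_Mapping.single a n) 1"
  proof -
    have "Poly_Mapping.single a (Suc n) = Poly_Mapping.single a 1 + Poly_Mapping.single a n"
      by (metis Suc_eq_plus1_left single_add)
    then show ?thesis by (simp add: pvar_def mult_single)
  qed
  show ?case unfolding e mult.assoc
    by (rule dec_cong[OF dec_var[OF Suc, where x=a and S=S]]) (simp add: EE_var_mult)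
qed

lemma dec_single_mult:
  fixes g :: "'a::field mpoly"
  assumes "dec (EE S g) r"
  shows "dec (EE S (Poly_Mapping.single \<mu> 1 * g)) r"
proof -
  have main: "finite K \<Longrightarrow> dec (EE S (Poly_Mapping.single (\<Sum>x\<in>K. Poly_Mapping.single x (e x)) 1 * g)) r" for K e
  proof (induction K rule: finite_induct)
    case empty
    then show ?case using assms by simp
  next
    case (insert a K)
    have "Poly_Mapping.single (\<Sum>x\<in>insert a K. Poly_Mapping.single x (e x)) (1::'a) * g =
       Poly_Mapping.single (Poly_Mapping.single a (e a)) 1 * (Poly_Mapping.single (\<Sum>x\<in>K. Poly_Mapping.single x (e x)) 1 * g)"
      using insert by (simp add: mult_single mult.assoc[symmetric])
    then show ?case using dec_single_pow[OF insert.IH, where a=a and n="e a"] by simp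
  qed
  have "dec (EE S (Poly_Mapping.single (\<Sum>x\<in>Poly_Mapping.keys \<mu>. Poly_Mapping.single x (Poly_Mapping.lookup \<mu> x)) 1 * g)) r"
    by (rule main) simp
  then show ?thesis by (simp only: poly_expand[symmetric])
qed

lemma dec_sparse:
  fixes g g1 :: "'a::field mpoly"
  assumes "dec (EE S g) r"
  shows "dec (EE S (g1 * g)) (card (Poly_Mapping.keys g1) * r)"
proof -
  have "dec (\<lambda>T. \<Sum>\<mu>\<in>Poly_Mapping.keys g1. Poly_Mapping.lookup g1 \<mu> * EE S (Poly_Mapping.single \<mu> 1 * g) T)
      (card (Poly_Mapping.keys g1) * r)"
    by (rule dec_sum[where G="\<lambda>\<mu>. EE S (Poly_Mapping.single \<mu> 1 * g)"])
       (simp_all add: dec_single_mult[OF assms])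
  then show ?thesis by (rule dec_cong) (rule EE_single_mult[symmetric])
qed



lemma lookup_minus_nat: "Poly_Mapping.lookup ((a::var \<Rightarrow>\<^sub>0 nat) - b) x = Poly_Mapping.lookup a x - Poly_Mapping.lookup b x"
  by (simp add: minus_poly_mapping.rep_eq)

lemma lookup_mlmono: "finite T \<Longrightarrow> Poly_Mapping.lookup (mlmono T) x = (if x \<in> T then 1 else 0)"
  by (simp add: mlmono_def lookup_sum lookup_single when_def)

lemma keys_mlmono: "finite T \<Longrightarrow> Poly_Mapping.keys (mlmono T) = T"
  by (auto simp: in_keys_iff lookup_mlmono split: if_splits)

lemma lookup_single_mult:
  fixes G :: "'a::field mpoly"
  shows "Poly_Mapping.lookup (Poly_Mapping.single k 1 * G) (k + \<nu>) = Poly_Mapping.lookup G \<nu>"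
proof -
  have "Poly_Mapping.single k 1 * G = Poly_Mapping.single k 1 * (\<Sum>\<nu>\<in>Poly_Mapping.keys G. Poly_Mapping.single \<nu> (Poly_Mapping.lookup G \<nu>))"
    by (rule arg_cong[OF poly_expand])
  also have "\<dots> = (\<Sum>\<nu>\<in>Poly_Mapping.keys G. Poly_Mapping.single (k + \<nu>) (Poly_Mapping.lookup G \<nu>))"
    by (simp add: sum_distrib_left mult_single)
  finally have "Poly_Mapping.lookup (Poly_Mapping.single k 1 * G) (k + \<nu>) =
      (\<Sum>\<nu>'\<in>Poly_Mapping.keys G. Poly_Mapping.lookup (Poly_Mapping.single (k + \<nu>') (Poly_Mapping.lookup G \<nu>')) (k + \<nu>))"
    by (simp add: lookup_sum)
  also have "\<dots> = (\<Sum>\<nu>'\<in>Poly_Mapping.keys G. if \<nu>' = \<nu> then Poly_Mapping.lookup G \<nu>' else 0)"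
    by (rule sum.cong) (auto simp: lookup_single when_def)
  also have "\<dots> = Poly_Mapping.lookup G \<nu>"
    by (simp add: sum.delta in_keys_iff)
  finally show ?thesis .
qed

lemma Mentry_eq:
  fixes g G0 :: "'a::field mpoly"
  assumes fin: "finite (p \<union> q)"
    and G0: "\<And>\<nu>. Poly_Mapping.lookup G0 \<nu> =
        (if Poly_Mapping.keys \<nu> \<subseteq> p \<union> q then Poly_Mapping.lookup g (mlmono (p \<union> q) + \<nu>) else 0)"
  shows "Mentry g p q = G0"
  unfolding Mentry_def
proof (rule the_equality)
  let ?T = "p \<union> q" let ?M = "mlmono (p \<union> q)"
  have kM: "Poly_Mapping.keys ?M = ?T" using keys_mlmono[OF fin] .
  show "(\<forall>\<mu>\<in>Poly_Mapping.keys G0. Poly_Mapping.keys \<mu> \<subseteq> ?T) \<and>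
    (\<exists>Q. g = Poly_Mapping.single ?M 1 * G0 + Q \<and>
      (\<forall>\<mu>\<in>Poly_Mapping.keys Q. \<not> ((\<exists>\<nu>. \<mu> = ?M + \<nu>) \<and> Poly_Mapping.keys \<mu> \<subseteq> ?T)))"
  proof (intro conjI exI)
    show "\<forall>\<mu>\<in>Poly_Mapping.keys G0. Poly_Mapping.keys \<mu> \<subseteq> ?T"
    proof
      fix \<mu> assume "\<mu> \<in> Poly_Mapping.keys G0"
      then have "Poly_Mapping.lookup G0 \<mu> \<noteq> 0" by (simp add: in_keys_iff)
      then show "Poly_Mapping.keys \<mu> \<subseteq> ?T" using G0[of \<mu>] by (cases "Poly_Mapping.keys \<mu> \<subseteq> ?T") simp_all
    qed
    show "g = Poly_Mapping.single ?M 1 * G0 + (g - Poly_Mapping.single ?M 1 * G0)" by simp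
    show "\<forall>\<mu>\<in>Poly_Mapping.keys (g - Poly_Mapping.single ?M 1 * G0). \<not> ((\<exists>\<nu>. \<mu> = ?M + \<nu>) \<and> Poly_Mapping.keys \<mu> \<subseteq> ?T)"
    proof (intro ballI notI)
      fix \<mu> assume \<mu>: "\<mu> \<in> Poly_Mapping.keys (g - Poly_Mapping.single ?M 1 * G0)"
        and h: "(\<exists>\<nu>. \<mu> = ?M + \<nu>) \<and> Poly_Mapping.keys \<mu> \<subseteq> ?T"
      then obtain \<nu> where \<nu>: "\<mu> = ?M + \<nu>" by blast
      have "Poly_Mapping.keys \<nu> \<subseteq> ?T" using h \<nu> by (auto simp: keys_add_nat)
      then have "Poly_Mapping.lookup (g - Poly_Mapping.single ?M 1 * G0) \<mu> = 0"
        using \<nu> by (simp add: lookup_minus lookup_single_mult G0)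
      then show False using \<mu> by (simp add: in_keys_iff)
    qed
  qed
next
  fix G
  let ?T = "p \<union> q" let ?M = "mlmono (p \<union> q)"
  have kM: "Poly_Mapping.keys ?M = ?T" using keys_mlmono[OF fin] .
  assume a: "(\<forall>\<mu>\<in>Poly_Mapping.keys G. Poly_Mapping.keys \<mu> \<subseteq> ?T) \<and>
    (\<exists>Q. g = Poly_Mapping.single ?M 1 * G + Q \<and>
      (\<forall>\<mu>\<in>Poly_Mapping.keys Q. \<not> ((\<exists>\<nu>. \<mu> = ?M + \<nu>) \<and> Poly_Mapping.keys \<mu> \<subseteq> ?T)))"
  then obtain Q where Q: "g = Poly_Mapping.single ?M 1 * G + Q"
    "\<forall>\<mu>\<in>Poly_Mapping.keys Q. \<not> ((\<exists>\<nu>. \<mu> = ?M + \<nu>) \<and> Poly_Mapping.keys \<mu> \<subseteq> ?T)" by blast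
  show "G = G0"
  proof (rule poly_mapping_eqI)
    fix \<nu>
    show "Poly_Mapping.lookup G \<nu> = Poly_Mapping.lookup G0 \<nu>"
    proof (cases "Poly_Mapping.keys \<nu> \<subseteq> ?T")
      case True
      have "Poly_Mapping.keys (?M + \<nu>) \<subseteq> ?T" using True kM by (simp add: keys_add_nat)
      then have "?M + \<nu> \<notin> Poly_Mapping.keys Q" using Q(2) by blast
      then have "Poly_Mapping.lookup Q (?M + \<nu>) = 0" by (simp add: in_keys_iff)
      then have "Poly_Mapping.lookup g (?M + \<nu>) = Poly_Mapping.lookup G \<nu>"
        by (subst Q(1)) (simp add: lookup_add lookup_single_mult)
      then show ?thesis using True G0 by simp
    next
      case False
      then have "\<nu> \<notin> Poly_Mapping.keys G" using a by blast
      then show ?thesis using False G0 by (simp add: in_keys_iff)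
    qed
  qed
qed

lemma peval_Mentry:
  fixes g :: "'a::field mpoly"
  assumes fin: "finite (p \<union> q)"
  shows "peval S (Mentry g p q) = EE S g (p \<union> q)"
proof -
  let ?T = "p \<union> q" let ?M = "mlmono (p \<union> q)"
  have kM: "Poly_Mapping.keys ?M = ?T" using keys_mlmono[OF fin] .
  define f where "f = (\<lambda>\<nu>. if Poly_Mapping.keys \<nu> \<subseteq> ?T then Poly_Mapping.lookup g (?M + \<nu>) else 0)"
  have "{\<nu>. f \<nu> \<noteq> 0} \<subseteq> (\<lambda>\<nu>. ?M + \<nu>) -` Poly_Mapping.keys g"
    by (auto simp: f_def in_keys_iff)
  moreover have "finite ((\<lambda>\<nu>. ?M + \<nu>) -` Poly_Mapping.keys g)"
    by (rule finite_vimageI) (auto simp: inj_def)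
  ultimately have ff: "finite {\<nu>. f \<nu> \<noteq> 0}" by (rule finite_subset)
  define G0 where "G0 = Abs_poly_mapping f"
  have lG0: "Poly_Mapping.lookup G0 = f" using ff by (simp add: G0_def)
  have M: "Mentry g p q = G0" by (rule Mentry_eq[OF fin]) (simp add: lG0 f_def)
  have kG0: "Poly_Mapping.keys G0 = {\<nu>. Poly_Mapping.keys \<nu> \<subseteq> ?T \<and> ?M + \<nu> \<in> Poly_Mapping.keys g}"
  proof (rule Set.set_eqI)
    fix \<nu>
    show "\<nu> \<in> Poly_Mapping.keys G0 \<longleftrightarrow> \<nu> \<in> {\<nu>. Poly_Mapping.keys \<nu> \<subseteq> ?T \<and> ?M + \<nu> \<in> Poly_Mapping.keys g}"
      unfolding in_keys_iff[of \<nu> G0] in_keys_iff[of "?M + \<nu>" g] mem_Collect_eq lG0 f_def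
      by (cases "Poly_Mapping.keys \<nu> \<subseteq> ?T") simp_all
  qed
  have inj: "inj_on (\<lambda>\<nu>. ?M + \<nu>) (Poly_Mapping.keys G0)" by (auto simp: inj_on_def)
  have img: "(\<lambda>\<nu>. ?M + \<nu>) ` Poly_Mapping.keys G0 = {\<mu>\<in>Poly_Mapping.keys g. Poly_Mapping.keys \<mu> = ?T}"
  proof
    show "(\<lambda>\<nu>. ?M + \<nu>) ` Poly_Mapping.keys G0 \<subseteq> {\<mu>\<in>Poly_Mapping.keys g. Poly_Mapping.keys \<mu> = ?T}"
      using kM by (auto simp: kG0 keys_add_nat)
    show "{\<mu>\<in>Poly_Mapping.keys g. Poly_Mapping.keys \<mu> = ?T} \<subseteq> (\<lambda>\<nu>. ?M + \<nu>) ` Poly_Mapping.keys G0"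
    proof
      fix \<mu> assume \<mu>: "\<mu> \<in> {\<mu>\<in>Poly_Mapping.keys g. Poly_Mapping.keys \<mu> = ?T}"
      have e: "\<mu> = ?M + (\<mu> - ?M)"
      proof (rule poly_mapping_eqI)
        fix x show "Poly_Mapping.lookup \<mu> x = Poly_Mapping.lookup (?M + (\<mu> - ?M)) x"
        proof (cases "x \<in> ?T")
          case True
          then have "x \<in> Poly_Mapping.keys \<mu>" using \<mu> by simp
          then have "Poly_Mapping.lookup \<mu> x \<noteq> 0" by (simp add: in_keys_iff)
          then show ?thesis using True fin by (simp add: lookup_add lookup_minus_nat lookup_mlmono)
        next
          case False
          then show ?thesis using fin by (simp add: lookup_add lookup_minus_nat lookup_mlmono)
        qed
      qed
      have "Poly_Mapping.keys (\<mu> - ?M) \<subseteq> ?T" using \<mu> by (auto simp: in_keys_iff lookup_minus_nat)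
      then have "\<mu> - ?M \<in> Poly_Mapping.keys G0" using \<mu> e by (simp add: kG0)
      then show "\<mu> \<in> (\<lambda>\<nu>. ?M + \<nu>) ` Poly_Mapping.keys G0" using e by blast
    qed
  qed
  have "peval S G0 = (\<Sum>\<nu>\<in>Poly_Mapping.keys G0. Poly_Mapping.lookup g (?M + \<nu>) *
        (\<Prod>x\<in>?T. S x ^ (Poly_Mapping.lookup (?M + \<nu>) x - 1)))"
    unfolding peval_def
  proof (rule sum.cong[OF refl])
    fix \<nu> assume \<nu>: "\<nu> \<in> Poly_Mapping.keys G0"
    then have kn: "Poly_Mapping.keys \<nu> \<subseteq> ?T" by (simp add: kG0)
    have "(\<Prod>x\<in>Poly_Mapping.keys \<nu>. S x ^ Poly_Mapping.lookup \<nu> x) = (\<Prod>x\<in>?T. S x ^ Poly_Mapping.lookup \<nu> x)"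
      by (rule prod.mono_neutral_left) (use fin kn in \<open>auto simp: in_keys_iff\<close>)
    also have "\<dots> = (\<Prod>x\<in>?T. S x ^ (Poly_Mapping.lookup (?M + \<nu>) x - 1))"
      by (rule prod.cong) (use fin in \<open>auto simp: lookup_add lookup_mlmono\<close>)
    finally show "Poly_Mapping.lookup G0 \<nu> * (\<Prod>x\<in>Poly_Mapping.keys \<nu>. S x ^ Poly_Mapping.lookup \<nu> x) =
       Poly_Mapping.lookup g (?M + \<nu>) * (\<Prod>x\<in>?T. S x ^ (Poly_Mapping.lookup (?M + \<nu>) x - 1))"
      using kn by (simp add: lG0 f_def)
  qed
  also have "\<dots> = (\<Sum>\<mu>\<in>{\<mu>\<in>Poly_Mapping.keys g. Poly_Mapping.keys \<mu> = ?T}.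
        Poly_Mapping.lookup g \<mu> * (\<Prod>x\<in>?T. S x ^ (Poly_Mapping.lookup \<mu> x - 1)))"
    by (subst img[symmetric], subst sum.reindex[OF inj]) simp
  also have "\<dots> = EE S g ?T"
    unfolding EE_def Lin_def phi_def
    by (rule sum.mono_neutral_cong_left) auto
  finally show ?thesis using M by simp
qed

lemma finite_Ysub: "finite (Ysub m i)"
proof -
  have "Ysub m i \<subseteq> (\<lambda>j. Yv (Suc j)) ` {..<m}" by (auto simp: Ysub_def)
  then show ?thesis by (rule finite_subset) simp
qed

lemma finite_Zsub: "finite (Zsub m i)"
proof -
  have "Zsub m i \<subseteq> (\<lambda>j. Zv (Suc j)) ` {..<m}" by (auto simp: Zsub_def)
  then show ?thesis by (rule finite_subset) simp
qed

lemma rank_bound: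
  fixes g :: "'a::field mpoly"
  assumes "dec (EE S g) r"
  shows "vec_space.rank (2^m) (Mmat_eval m g S) \<le> r"
proof -
  obtain I :: "nat set" and u w where 1: "finite I" "card I \<le> r"
    "\<forall>p q. isY p \<longrightarrow> isZ q \<longrightarrow> EE S g (p \<union> q) = (\<Sum>i\<in>I. u i p * w i q)"
    using assms unfolding dec_def by blast
  have "Mmat_eval m g S = mat (2^m) (2^m) (\<lambda>(i,j). \<Sum>t\<in>I. u t (Ysub m i) * w t (Zsub m j))"
    unfolding Mmat_eval_def
  proof (rule eq_matI)
    fix i j assume "i < dim_row (mat (2^m) (2^m) (\<lambda>(i,j). \<Sum>t\<in>I. u t (Ysub m i) * w t (Zsub m j)))"
       "j < dim_col (mat (2^m) (2^m) (\<lambda>(i,j). \<Sum>t\<in>I. u t (Ysub m i) * w t (Zsub m j)))"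
    moreover have "isY (Ysub m i)" "isZ (Zsub m j)" by (auto simp: isY_def isZ_def Ysub_def Zsub_def)
    ultimately show "mat (2 ^ m) (2 ^ m) (\<lambda>(i, j). peval S (Mentry g (Ysub m i) (Zsub m j))) $$ (i, j) =
         mat (2^m) (2^m) (\<lambda>(i,j). \<Sum>t\<in>I. u t (Ysub m i) * w t (Zsub m j)) $$ (i, j)"
      using 1(3) by (simp add: peval_Mentry finite_Ysub finite_Zsub)
  qed auto
  then show ?thesis
    using rank_sum_rank1[OF 1(1), where n="2^m" and nc="2^m" and u="\<lambda>t i. u t (Ysub m i)" and w="\<lambda>t j. w t (Zsub m j)"] 1(2)
    by (metis (no_types) order_trans)
qed

lemma maxrank_bound:
  fixes g :: "'a::field mpoly"
  assumes "\<And>S. \<exists>r. dec (EE S g) r \<and> real r \<le> B"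
  shows "real (maxrank m g) \<le> B"
proof -
  let ?R = "range (\<lambda>S. vec_space.rank (2 ^ m) (Mmat_eval m g S))"
  have le: "\<And>S. real (vec_space.rank (2 ^ m) (Mmat_eval m g S)) \<le> B"
  proof -
    fix S obtain r where "dec (EE S g) r" "real r \<le> B" using assms by blast
    then show "real (vec_space.rank (2 ^ m) (Mmat_eval m g S)) \<le> B"
      using rank_bound[of S g r m] by linarith
  qed
  have "?R \<subseteq> {..nat \<lfloor>B\<rfloor>}"
  proof
    fix x assume "x \<in> ?R"
    then obtain S where "x = vec_space.rank (2 ^ m) (Mmat_eval m g S)" by blast
    then have "real x \<le> B" using le by simp
    then show "x \<in> {..nat \<lfloor>B\<rfloor>}" by (simp add: le_nat_floor)
  qed
  then have "finite ?R" by (rule finite_subset) simp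
  then have "maxrank m g \<in> ?R" unfolding maxrank_def by (rule Max_in) simp
  then show ?thesis using le by auto
qed



lemma keys_fpoly:
  fixes f :: "'a::field formula"
  shows "\<mu> \<in> Poly_Mapping.keys (fpoly f) \<Longrightarrow> Poly_Mapping.keys \<mu> \<subseteq> fvars f"
proof (induction f arbitrary: \<mu>)
  case (Var x)
  then show ?case by (simp add: keys_pvar)
next
  case (Cst c)
  then show ?case by (simp add: pconst_def split: if_splits)
next
  case (Plus f1 f2)
  then show ?case using keys_add[of "fpoly f1" "fpoly f2"] by auto
next
  case (Prod f1 f2)
  then obtain a b where "\<mu> = a + b" "a \<in> Poly_Mapping.keys (fpoly f1)" "b \<in> Poly_Mapping.keys (fpoly f2)"
    using keys_mult[of "fpoly f1" "fpoly f2"] by auto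
  then show ?case using Prod.IH by (auto simp: keys_add_nat)
qed

lemma EE_fsupport:
  fixes f :: "'a::field formula"
  shows "\<not> T \<subseteq> fvars f \<Longrightarrow> EE S (fpoly f) T = 0"
  by (rule EE_support) (use keys_fpoly in auto)

lemma finite_Yset: "finite (Yset m)" by (simp add: Yset_def)
lemma finite_Zset: "finite (Zset m)" by (simp add: Zset_def)

lemma dec_triv:
  fixes f :: "'a::field formula"
  assumes "fvars f \<subseteq> Yset m \<union> Zset m"
  shows "\<exists>r. dec (EE S (fpoly f)) r \<and> real r = 2 powr aY m f"
proof -
  have dY: "dec (EE S (fpoly f)) (2 ^ card (fvars f \<inter> Yset m))"
  proof (rule dec_trivY[where V="fvars f"])
    show "\<And>T. \<not> T \<subseteq> fvars f \<Longrightarrow> EE S (fpoly f) T = 0" by (rule EE_fsupport)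
    show "fvars f \<inter> {x. \<exists>i. x = Yv i} \<subseteq> fvars f \<inter> Yset m"
      using assms by (auto simp: Zset_def)
    show "finite (fvars f \<inter> Yset m)" by (simp add: finite_Yset)
  qed
  have dZ: "dec (EE S (fpoly f)) (2 ^ card (fvars f \<inter> Zset m))"
  proof (rule dec_trivZ[where V="fvars f"])
    show "\<And>T. \<not> T \<subseteq> fvars f \<Longrightarrow> EE S (fpoly f) T = 0" by (rule EE_fsupport)
    show "fvars f \<inter> {x. \<exists>i. x = Zv i} \<subseteq> fvars f \<inter> Zset m"
      using assms by (auto simp: Yset_def)
    show "finite (fvars f \<inter> Zset m)" by (simp add: finite_Zset)
  qed
  show ?thesis
  proof (cases "card (fvars f \<inter> Yset m) \<le> card (fvars f \<inter> Zset m)")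
    case True
    then show ?thesis using dY
      by (intro exI[of _ "2 ^ card (fvars f \<inter> Yset m)"]) (simp add: aY_def min_def powr_realpow)
  next
    case False
    then show ?thesis using dZ
      by (intro exI[of _ "2 ^ card (fvars f \<inter> Zset m)"]) (simp add: aY_def min_def powr_realpow)
  qed
qed

lemma fvars_subf: "fvars (subf f p) \<subseteq> fvars f"
  by (induction f p rule: subf.induct) auto

lemma positions_finite: "finite (positions f)"
  by (induction f) auto

lemma positions_nil: "[] \<in> positions f"
  by (cases f) auto

lemma subf_append:
  "v \<in> positions f \<Longrightarrow> p \<in> positions (subf f v) \<Longrightarrow> v @ p \<in> positions f \<and> subf f (v @ p) = subf (subf f v) p"
proof (induction f arbitrary: v)
  case (Plus f1 f2)
  then show ?case by (cases v) auto
next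
  case (Prod f1 f2)
  then show ?case by (cases v) auto
qed auto

lemma leafpos_Plus: "leafpos (Plus f1 f2) = Cons False ` leafpos f1 \<union> Cons True ` leafpos f2"
  by (auto simp: leafpos_def)
lemma leafpos_Prod: "leafpos (Prod f1 f2) = Cons False ` leafpos f1 \<union> Cons True ` leafpos f2"
  by (auto simp: leafpos_def)
lemma leafpos_Var: "leafpos (Var x) = {[]}" by (auto simp: leafpos_def)
lemma leafpos_Cst: "leafpos (Cst c) = {[]}" by (auto simp: leafpos_def)

lemma leafpos_finite: "finite (leafpos f)"
  using positions_finite[of f] by (simp add: leafpos_def)

lemma leafpos_nonempty: "leafpos f \<noteq> {}"
  by (induction f) (auto simp: leafpos_Plus leafpos_Prod leafpos_Var leafpos_Cst)

lemma fsize_pos: "fsize f \<ge> 1"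
  by (cases f) auto

lemma all_Suc_split: "(\<forall>i<Suc n. P i) \<longleftrightarrow> P 0 \<and> (\<forall>j<n. P (Suc j))"
  by (auto simp: less_Suc_eq_0_disj)

lemma ex_Suc_split: "(\<exists>i\<le>Suc n. P i) \<longleftrightarrow> P 0 \<or> (\<exists>j\<le>n. P (Suc j))"
proof
  assume "\<exists>i\<le>Suc n. P i"
  then obtain i where "i \<le> Suc n" "P i" by blast
  then show "P 0 \<or> (\<exists>j\<le>n. P (Suc j))" by (cases i) auto
qed auto

lemma path_central_Cons:
  assumes "\<And>q. subf f (b # q) = subf c q"
  shows "path_central m f (b # q) \<longleftrightarrow> bY m f \<le> 2 * bY m c \<and> path_central m c q"
proof -
  have "path_central m f (b # q) \<longleftrightarrow> (\<forall>i<Suc (length q). bY m (subf f (take i (b#q))) \<le> 2 * bY m (subf f (take (Suc i) (b#q))))"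
    by (simp add: path_central_def)
  also have "\<dots> \<longleftrightarrow> bY m (subf f []) \<le> 2 * bY m (subf f [b]) \<and> (\<forall>j<length q. bY m (subf f (b # take j q)) \<le> 2 * bY m (subf f (b # take (Suc j) q)))"
    by (subst all_Suc_split) simp
  also have "\<dots> \<longleftrightarrow> bY m f \<le> 2 * bY m c \<and> path_central m c q"
    using assms[of "[]"] by (simp add: path_central_def assms)
  finally show ?thesis .
qed

lemma path_unbalanced_Cons:
  assumes "\<And>q. subf f (b # q) = subf c q"
  shows "path_unbalanced m k f (b # q) \<longleftrightarrow> unbalanced m k f \<or> path_unbalanced m k c q"
proof -
  have "path_unbalanced m k f (b # q) \<longleftrightarrow> (\<exists>i\<le>Suc (length q). unbalanced m k (subf f (take i (b#q))))"
    by (simp add: path_unbalanced_def)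
  also have "\<dots> \<longleftrightarrow> unbalanced m k (subf f []) \<or> (\<exists>j\<le>length q. unbalanced m k (subf f (b # take j q)))"
    by (subst ex_Suc_split) simp
  also have "\<dots> \<longleftrightarrow> unbalanced m k f \<or> path_unbalanced m k c q"
    by (simp add: path_unbalanced_def assms)
  finally show ?thesis .
qed

lemma weak_child:
  assumes "weak m k f" "\<not> unbalanced m k f" "bY m f \<le> 2 * bY m c"
    "\<And>q. subf f (b # q) = subf c q" "Cons b ` leafpos c \<subseteq> leafpos f"
  shows "weak m k c"
  unfolding weak_def
proof (intro ballI impI)
  fix q assume q: "q \<in> leafpos c" "path_central m c q"
  then have "b # q \<in> leafpos f" using assms(5) by blast
  moreover have "path_central m f (b # q)" using q assms(3) path_central_Cons[OF assms(4)] by simp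
  ultimately have "path_unbalanced m k f (b # q)" using assms(1) by (simp add: weak_def)
  then show "path_unbalanced m k c q" using path_unbalanced_Cons[OF assms(4)] assms(2) by simp
qed

lemma card_Y_mono: "fvars f \<subseteq> fvars g \<Longrightarrow> card (fvars f \<inter> Yset m) \<le> card (fvars g \<inter> Yset m)"
  by (rule card_mono) (auto simp: finite_Yset)
lemma card_Z_mono: "fvars f \<subseteq> fvars g \<Longrightarrow> card (fvars f \<inter> Zset m) \<le> card (fvars g \<inter> Zset m)"
  by (rule card_mono) (auto simp: finite_Zset)

lemma bY_mono: "fvars f \<subseteq> fvars g \<Longrightarrow> bY m f \<le> bY m g"
  using card_Y_mono[of f g m] card_Z_mono[of f g m] by (simp add: bY_def)

lemma aY_nonneg: "aY m f \<ge> 0" by (simp add: aY_def)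
lemma aY_le_bY: "aY m f \<le> bY m f" by (simp add: aY_def bY_def)

lemma bY_union_le:
  assumes "fvars f = fvars f1 \<union> fvars f2"
  shows "bY m f \<le> bY m f1 + bY m f2"
proof -
  have "card (fvars f \<inter> Yset m) \<le> card (fvars f1 \<inter> Yset m) + card (fvars f2 \<inter> Yset m)"
    unfolding assms Int_Un_distrib2 by (rule card_Un_le)
  moreover have "card (fvars f \<inter> Zset m) \<le> card (fvars f1 \<inter> Zset m) + card (fvars f2 \<inter> Zset m)"
    unfolding assms Int_Un_distrib2 by (rule card_Un_le)
  ultimately have A: "real (card (fvars f \<inter> Yset m)) \<le> real (card (fvars f1 \<inter> Yset m)) + real (card (fvars f2 \<inter> Yset m))"
    and B: "real (card (fvars f \<inter> Zset m)) \<le> real (card (fvars f1 \<inter> Zset m)) + real (card (fvars f2 \<inter> Zset m))"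
    by (metis of_nat_add of_nat_le_iff)+
  have "real (card (fvars f \<inter> Yset m)) + real (card (fvars f \<inter> Zset m)) \<le>
      (real (card (fvars f1 \<inter> Yset m)) + real (card (fvars f1 \<inter> Zset m))) +
      (real (card (fvars f2 \<inter> Yset m)) + real (card (fvars f2 \<inter> Zset m)))" using A B by linarith
  then show ?thesis unfolding bY_def add_divide_distrib[symmetric] by (rule divide_right_mono) simp
qed

lemma bY_union_eq:
  assumes "fvars f = fvars f1 \<union> fvars f2" "fvars f1 \<inter> fvars f2 = {}"
  shows "bY m f = bY m f1 + bY m f2"
proof -
  have "card (fvars f \<inter> Yset m) = card (fvars f1 \<inter> Yset m) + card (fvars f2 \<inter> Yset m)"
    unfolding assms Int_Un_distrib2 by (rule card_Un_disjoint) (use assms(2) finite_Yset in auto)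
  moreover have "card (fvars f \<inter> Zset m) = card (fvars f1 \<inter> Zset m) + card (fvars f2 \<inter> Zset m)"
    unfolding assms Int_Un_distrib2 by (rule card_Un_disjoint) (use assms(2) finite_Zset in auto)
  ultimately show ?thesis by (simp add: bY_def add_divide_distrib)
qed

lemma central_exists: "\<exists>q\<in>leafpos f. path_central m f q"
proof (induction f)
  case (Var x) then show ?case by (simp add: leafpos_Var path_central_def)
next
  case (Cst c) then show ?case by (simp add: leafpos_Cst path_central_def)
next
  case (Plus f1 f2)
  obtain q1 where q1: "q1 \<in> leafpos f1" "path_central m f1 q1" using Plus.IH(1) by blast
  obtain q2 where q2: "q2 \<in> leafpos f2" "path_central m f2 q2" using Plus.IH(2) by blast
  have b: "bY m (Plus f1 f2) \<le> bY m f1 + bY m f2" by (rule bY_union_le) simp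
  show ?case
  proof (cases "bY m f2 \<le> bY m f1")
    case True
    then have "path_central m (Plus f1 f2) (False # q1)"
      using b q1 by (subst path_central_Cons[where c=f1]) auto
    then show ?thesis using q1 by (auto simp: leafpos_Plus)
  next
    case False
    then have "path_central m (Plus f1 f2) (True # q2)"
      using b q2 by (subst path_central_Cons[where c=f2]) auto
    then show ?thesis using q2 by (auto simp: leafpos_Plus)
  qed
next
  case (Prod f1 f2)
  obtain q1 where q1: "q1 \<in> leafpos f1" "path_central m f1 q1" using Prod.IH(1) by blast
  obtain q2 where q2: "q2 \<in> leafpos f2" "path_central m f2 q2" using Prod.IH(2) by blast
  have b: "bY m (Prod f1 f2) \<le> bY m f1 + bY m f2" by (rule bY_union_le) simp
  show ?case
  proof (cases "bY m f2 \<le> bY m f1")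
    case True
    then have "path_central m (Prod f1 f2) (False # q1)"
      using b q1 by (subst path_central_Cons[where c=f1]) auto
    then show ?thesis using q1 by (auto simp: leafpos_Prod)
  next
    case False
    then have "path_central m (Prod f1 f2) (True # q2)"
      using b q2 by (subst path_central_Cons[where c=f2]) auto
    then show ?thesis using q2 by (auto simp: leafpos_Prod)
  qed
qed

lemma weak_k_le:
  assumes "weak m k f"
  shows "k \<le> bY m f"
proof -
  obtain q where q: "q \<in> leafpos f" "path_central m f q" using central_exists by blast
  then have "path_unbalanced m k f q" using assms by (simp add: weak_def)
  then obtain i where "unbalanced m k (subf f (take i q))" by (auto simp: path_unbalanced_def)
  then have "k \<le> bY m (subf f (take i q)) - aY m (subf f (take i q))" by (simp add: unbalanced_def)
  moreover have "bY m (subf f (take i q)) \<le> bY m f" by (rule bY_mono[OF fvars_subf])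
  ultimately show ?thesis using aY_nonneg[of m "subf f (take i q)"] by linarith
qed



definition cnt :: "'a formula \<Rightarrow> bool list \<Rightarrow> nat" where
  "cnt f q = card {i. i \<le> length q \<and> nondisjoint_prod (subf f (take i q))}"

lemma ps_depth_cnt: "ps_depth f = Max (cnt f ` leafpos f)"
  by (simp add: ps_depth_def cnt_def)

lemma card_Suc_image: "card (Suc ` A) = card A"
  by (rule card_image) simp

lemma cnt_Cons:
  assumes "\<And>q. subf f (b # q) = subf c q"
  shows "cnt f (b # q) = (if nondisjoint_prod f then 1 else 0) + cnt c q"
proof -
  let ?P = "\<lambda>i. nondisjoint_prod (subf f (take i (b # q)))"
  have e: "{i. i \<le> length (b # q) \<and> ?P i} = (if ?P 0 then {0} else {}) \<union> Suc ` {j. j \<le> length q \<and> ?P (Suc j)}"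
  proof (rule Set.set_eqI)
    fix i show "i \<in> {i. i \<le> length (b # q) \<and> ?P i} \<longleftrightarrow> i \<in> (if ?P 0 then {0} else {}) \<union> Suc ` {j. j \<le> length q \<and> ?P (Suc j)}"
      by (cases i) auto
  qed
  have c1: "card ((if ?P 0 then {0} else {}) \<union> Suc ` {j. j \<le> length q \<and> ?P (Suc j)})
      = card (if ?P 0 then {0::nat} else {}) + card {j. j \<le> length q \<and> ?P (Suc j)}"
  proof -
    have cs: "card (Suc ` A) = card A" for A :: "nat set" by (rule card_image) simp
    show ?thesis by (subst card_Un_disjoint) (auto simp: cs)
  qed
  have c2: "{j. j \<le> length q \<and> ?P (Suc j)} = {j. j \<le> length q \<and> nondisjoint_prod (subf c (take j q))}"
    using assms by simp
  show ?thesis unfolding cnt_def e c1 c2 by (simp add: card_Suc_image)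
qed

lemma ps_depth_child:
  assumes "\<And>q. subf f (b # q) = subf c q" "Cons b ` leafpos c \<subseteq> leafpos f"
  shows "ps_depth c + (if nondisjoint_prod f then 1 else 0) \<le> ps_depth f"
proof -
  have "ps_depth c \<in> cnt c ` leafpos c" unfolding ps_depth_cnt
    by (rule Max_in) (simp_all add: leafpos_finite leafpos_nonempty)
  then obtain q where q: "q \<in> leafpos c" "ps_depth c = cnt c q" by blast
  then have "b # q \<in> leafpos f" using assms(2) by blast
  then have "cnt f (b # q) \<le> ps_depth f" unfolding ps_depth_cnt
    by (intro Max_ge) (simp_all add: leafpos_finite)
  then show ?thesis using cnt_Cons[OF assms(1)] q by simp
qed

definition ps_ok :: "nat \<Rightarrow> 'a::comm_semiring_1 formula \<Rightarrow> bool" where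
  "ps_ok s f = (\<forall>p\<in>positions f. (\<exists>f1 f2. subf f p = Prod f1 f2) \<longrightarrow>
         disjoint_prod (subf f p) \<or> sparse_prod s (subf f p))"

lemma ps_ok_sub: "ps_ok s f \<Longrightarrow> v \<in> positions f \<Longrightarrow> ps_ok s (subf f v)"
  unfolding ps_ok_def by (metis subf_append)

lemma ps_ok_Plus: "ps_ok s (Plus f1 f2) \<Longrightarrow> ps_ok s f1 \<and> ps_ok s f2"
  using ps_ok_sub[of s "Plus f1 f2" "[False]"] ps_ok_sub[of s "Plus f1 f2" "[True]"]
  by (simp add: positions_nil)

lemma ps_ok_Prod: "ps_ok s (Prod f1 f2) \<Longrightarrow> ps_ok s f1 \<and> ps_ok s f2 \<and>
   (disjoint_prod (Prod f1 f2) \<or> sparse_prod s (Prod f1 f2))"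
  using ps_ok_sub[of s "Prod f1 f2" "[False]"] ps_ok_sub[of s "Prod f1 f2" "[True]"]
  by (auto simp: positions_nil ps_ok_def)

lemma le_mult_ge1:
  fixes x y a b :: real
  assumes "0 \<le> y" "x \<le> y" "1 \<le> a" "1 \<le> b"
  shows "x \<le> a * b * y"
proof -
  have "1 \<le> a * b" using mult_mono[of 1 a 1 b] assms by simp
  then have "y \<le> (a * b) * y" using mult_right_mono[of 1 "a*b" y] assms(1) by simp
  then show ?thesis using assms(2) by linarith
qed

lemma bound_mono:
  fixes a P1 P c1 c X :: real
  assumes "0 \<le> X" "a \<le> P1 * c1 * X" "P1 \<le> P" "c1 \<le> c" "0 \<le> P1" "0 \<le> c1"
  shows "a \<le> P * c * X"
proof -
  have "P1 * c1 \<le> P * c" using mult_mono assms by (metis order_trans mult_nonneg_nonneg)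
  then have "P1 * c1 * X \<le> P * c * X" using assms(1) by (rule mult_right_mono)
  then show ?thesis using assms(2) by linarith
qed

lemma pow2_mono: "a \<le> b \<Longrightarrow> (2::real) ^ a \<le> 2 ^ b"
  by (rule power_increasing) auto

lemma unb_case:
  fixes f :: "'a::field formula"
  assumes "fvars f \<subseteq> Yset m \<union> Zset m" "unbalanced m k f"
  shows "\<exists>r. dec (EE S (fpoly f)) r \<and> real r \<le> 2 ^ (s * ps_depth f) * real (fsize f) * 2 powr (bY m f - k / 2)"
proof -
  obtain r where r: "dec (EE S (fpoly f)) r" "real r = 2 powr aY m f" using dec_triv[OF assms(1)] by blast
  have "aY m f \<le> bY m f - k / 2"
    using assms(2) aY_le_bY[of m f] by (simp add: unbalanced_def)
  then have "2 powr aY m f \<le> 2 powr (bY m f - k / 2)" by simp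
  then have "real r \<le> 2 ^ (s * ps_depth f) * real (fsize f) * 2 powr (bY m f - k / 2)"
    using r(2) fsize_pos[of f] by (intro le_mult_ge1) auto
  then show ?thesis using r(1) by blast
qed

lemma leaf_unbalanced:
  assumes "weak m k f" "leafpos f = {[]}"
  shows "unbalanced m k f"
  using assms by (simp add: weak_def path_central_def path_unbalanced_def)

lemma child_bound:
  fixes f c :: "'a::field formula"
  assumes IH: "weak m k c \<Longrightarrow> \<exists>r. dec (EE S (fpoly c)) r \<and>
        real r \<le> 2 ^ (s * ps_depth c) * real (fsize c) * 2 powr (bY m c - k / 2)"
    and w: "weak m k f" and nu: "\<not> unbalanced m k f"
    and sub: "\<And>q. subf f (b # q) = subf c q" and lp: "Cons b ` leafpos c \<subseteq> leafpos f"
    and fv: "fvars c \<subseteq> fvars f" "fvars c \<subseteq> Yset m \<union> Zset m"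
  shows "\<exists>r. dec (EE S (fpoly c)) r \<and> real r \<le> 2 ^ (s * ps_depth c) * real (fsize c) * 2 powr (bY m f - k / 2)"
proof (cases "bY m f \<le> 2 * bY m c")
  case True
  then have "weak m k c" using weak_child[OF w nu True sub lp] by simp
  then obtain r where r: "dec (EE S (fpoly c)) r"
    "real r \<le> 2 ^ (s * ps_depth c) * real (fsize c) * 2 powr (bY m c - k / 2)" using IH by blast
  have "2 powr (bY m c - k / 2) \<le> 2 powr (bY m f - k / 2)" using bY_mono[OF fv(1), of m] by simp
  then have "2 ^ (s * ps_depth c) * real (fsize c) * 2 powr (bY m c - k / 2) \<le>
       2 ^ (s * ps_depth c) * real (fsize c) * 2 powr (bY m f - k / 2)"
    by (rule mult_left_mono) simp
  then show ?thesis using r by (intro exI[of _ r]) linarith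
next
  case False
  obtain r where r: "dec (EE S (fpoly c)) r" "real r = 2 powr aY m c" using dec_triv[OF fv(2)] by blast
  have "k \<le> bY m f" by (rule weak_k_le[OF w])
  then have "aY m c \<le> bY m f - k / 2" using False aY_le_bY[of m c] by linarith
  then have "2 powr aY m c \<le> 2 powr (bY m f - k / 2)" by simp
  then have "real r \<le> 2 ^ (s * ps_depth c) * real (fsize c) * 2 powr (bY m f - k / 2)"
    using r(2) fsize_pos[of c] by (intro le_mult_ge1) auto
  then show ?thesis using r(1) by blast
qed



lemma disj_combine:
  fixes g1 g2 :: "'a::field mpoly"
  assumes "dec (EE S g1) r1" "dec (EE S g2) r2"
    "\<forall>\<mu>\<in>Poly_Mapping.keys g1. Poly_Mapping.keys \<mu> \<subseteq> X1"
    "\<forall>\<mu>\<in>Poly_Mapping.keys g2. Poly_Mapping.keys \<mu> \<subseteq> X2" "X1 \<inter> X2 = {}"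
  shows "dec (EE S (g1 * g2)) (r1 * r2)"
  by (rule dec_cong[OF dec_disj[OF assms(1,2), of X1 X2]]) (simp add: EE_disj[OF assms(3,4,5)])

lemma disj_arith:
  assumes "real r1 \<le> P1 * c1 * 2 powr (b1 - k / 2)" "real r2 \<le> 2 powr b2"
    "P1 \<le> P" "c1 \<le> c" "0 \<le> P1" "0 \<le> c1"
  shows "real (r1 * r2) \<le> P * c * 2 powr (b1 + b2 - k / 2)"
proof -
  have "real (r1 * r2) = real r1 * real r2" by simp
  also have "\<dots> \<le> (P1 * c1 * 2 powr (b1 - k / 2)) * 2 powr b2"
    by (rule mult_mono) (use assms in auto)
  also have "\<dots> = P1 * c1 * 2 powr (b1 + b2 - k / 2)"
    by (simp add: powr_add[symmetric] algebra_simps)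
  finally have h: "real (r1 * r2) \<le> P1 * c1 * 2 powr (b1 + b2 - k / 2)" .
  show ?thesis by (rule bound_mono[OF _ h]) (use assms in auto)
qed

lemma sparse_arith:
  assumes "real K \<le> 2 ^ s" "real r2 \<le> 2 ^ (s * d2) * c2 * X" "s * (d2 + 1) \<le> s * d" "c2 \<le> c"
    "0 \<le> X" "0 \<le> c2"
  shows "real (K * r2) \<le> 2 ^ (s * d) * c * X"
proof -
  have "real (K * r2) = real K * real r2" by simp
  also have "\<dots> \<le> 2 ^ s * (2 ^ (s * d2) * c2 * X)"
    by (rule mult_mono) (use assms in auto)
  also have "\<dots> = 2 ^ (s * (d2 + 1)) * c2 * X"
    by (simp add: power_add algebra_simps)
  finally have h: "real (K * r2) \<le> 2 ^ (s * (d2 + 1)) * c2 * X" .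
  show ?thesis by (rule bound_mono[OF _ h]) (use assms pow2_mono in auto)
qed

lemma plus_arith:
  fixes P X :: real
  assumes "a1 \<le> P * c1 * X" "a2 \<le> P * c2 * X" "0 \<le> P" "0 \<le> X"
  shows "a1 + a2 \<le> P * (c1 + c2 + 1) * X"
proof -
  have "P * (c1 + c2 + 1) * X = P * c1 * X + P * c2 * X + P * X" by (simp add: algebra_simps)
  moreover have "0 \<le> P * X" using assms by simp
  ultimately show ?thesis using assms by linarith
qed

lemma main:
  fixes f :: "'a::field formula"
  shows "ps_ok s f \<Longrightarrow> fvars f \<subseteq> Yset m \<union> Zset m \<Longrightarrow> weak m k f \<Longrightarrow>
    \<exists>r. dec (EE S (fpoly f)) r \<and> real r \<le> 2 ^ (s * ps_depth f) * real (fsize f) * 2 powr (bY m f - k / 2)"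
proof (induction f)
  case (Var x)
  have "unbalanced m k (Var x :: 'a formula)" by (rule leaf_unbalanced[OF Var.prems(3) leafpos_Var])
  then show ?case by (rule unb_case[OF Var.prems(2)])
next
  case (Cst c)
  have "unbalanced m k (Cst c :: 'a formula)" by (rule leaf_unbalanced[OF Cst.prems(3) leafpos_Cst])
  then show ?case by (rule unb_case[OF Cst.prems(2)])
next
  case (Plus f1 f2)
  let ?f = "Plus f1 f2"
  let ?P = "(2::real) ^ (s * ps_depth ?f)" let ?X = "(2::real) powr (bY m ?f - k / 2)"
  show ?case
  proof (cases "unbalanced m k ?f")
    case True then show ?thesis by (rule unb_case[OF Plus.prems(2)])
  next
    case nu: False
    have ok: "ps_ok s f1" "ps_ok s f2" using ps_ok_Plus[OF Plus.prems(1)] by auto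
    have fv1: "fvars f1 \<subseteq> fvars ?f" "fvars f1 \<subseteq> Yset m \<union> Zset m" using Plus.prems(2) by auto
    have fv2: "fvars f2 \<subseteq> fvars ?f" "fvars f2 \<subseteq> Yset m \<union> Zset m" using Plus.prems(2) by auto
    have sub1: "\<And>q. subf ?f (False # q) = subf f1 q" by simp
    have sub2: "\<And>q. subf ?f (True # q) = subf f2 q" by simp
    have lp1: "Cons False ` leafpos f1 \<subseteq> leafpos ?f" by (auto simp: leafpos_Plus)
    have lp2: "Cons True ` leafpos f2 \<subseteq> leafpos ?f" by (auto simp: leafpos_Plus)
    have IH1: "weak m k f1 \<Longrightarrow> \<exists>r. dec (EE S (fpoly f1)) r \<and>
        real r \<le> 2 ^ (s * ps_depth f1) * real (fsize f1) * 2 powr (bY m f1 - k / 2)"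
      using Plus.IH(1) ok(1) fv1(2) by blast
    have IH2: "weak m k f2 \<Longrightarrow> \<exists>r. dec (EE S (fpoly f2)) r \<and>
        real r \<le> 2 ^ (s * ps_depth f2) * real (fsize f2) * 2 powr (bY m f2 - k / 2)"
      using Plus.IH(2) ok(2) fv2(2) by blast
    obtain r1 where r1: "dec (EE S (fpoly f1)) r1"
        "real r1 \<le> 2 ^ (s * ps_depth f1) * real (fsize f1) * ?X"
      using child_bound[OF IH1 Plus.prems(3) nu sub1 lp1 fv1] by blast
    obtain r2 where r2: "dec (EE S (fpoly f2)) r2"
        "real r2 \<le> 2 ^ (s * ps_depth f2) * real (fsize f2) * ?X"
      using child_bound[OF IH2 Plus.prems(3) nu sub2 lp2 fv2] by blast
    have d1: "ps_depth f1 \<le> ps_depth ?f" using ps_depth_child[OF sub1 lp1] by (simp add: nondisjoint_prod_def)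
    have d2: "ps_depth f2 \<le> ps_depth ?f" using ps_depth_child[OF sub2 lp2] by (simp add: nondisjoint_prod_def)
    have "dec (\<lambda>T. EE S (fpoly f1) T + EE S (fpoly f2) T) (r1 + r2)" by (rule dec_add[OF r1(1) r2(1)])
    then have dec: "dec (EE S (fpoly ?f)) (r1 + r2)" by (rule dec_cong) (simp add: EE_add)
    have a1: "real r1 \<le> ?P * real (fsize f1) * ?X"
      by (rule bound_mono[OF _ r1(2)]) (simp_all add: pow2_mono d1)
    have a2: "real r2 \<le> ?P * real (fsize f2) * ?X"
      by (rule bound_mono[OF _ r2(2)]) (simp_all add: pow2_mono d2)
    have "real r1 + real r2 \<le> ?P * (real (fsize f1) + real (fsize f2) + 1) * ?X"
      by (rule plus_arith[OF a1 a2]) simp_all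
    then have "real (r1 + r2) \<le> ?P * real (fsize ?f) * ?X" by (simp add: add.commute)
    then show ?thesis using dec by blast
  qed
next
  case (Prod f1 f2)
  let ?f = "Prod f1 f2"
  let ?P = "(2::real) ^ (s * ps_depth ?f)" let ?X = "(2::real) powr (bY m ?f - k / 2)"
  show ?case
  proof (cases "unbalanced m k ?f")
    case True then show ?thesis by (rule unb_case[OF Prod.prems(2)])
  next
    case nu: False
    have ok: "ps_ok s f1" "ps_ok s f2" "disjoint_prod ?f \<or> sparse_prod s ?f"
      using ps_ok_Prod[OF Prod.prems(1)] by auto
    have fv1: "fvars f1 \<subseteq> fvars ?f" "fvars f1 \<subseteq> Yset m \<union> Zset m" using Prod.prems(2) by auto
    have fv2: "fvars f2 \<subseteq> fvars ?f" "fvars f2 \<subseteq> Yset m \<union> Zset m" using Prod.prems(2) by auto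
    have sub1: "\<And>q. subf ?f (False # q) = subf f1 q" by simp
    have sub2: "\<And>q. subf ?f (True # q) = subf f2 q" by simp
    have lp1: "Cons False ` leafpos f1 \<subseteq> leafpos ?f" by (auto simp: leafpos_Prod)
    have lp2: "Cons True ` leafpos f2 \<subseteq> leafpos ?f" by (auto simp: leafpos_Prod)
    have IH1: "weak m k f1 \<Longrightarrow> \<exists>r. dec (EE S (fpoly f1)) r \<and>
        real r \<le> 2 ^ (s * ps_depth f1) * real (fsize f1) * 2 powr (bY m f1 - k / 2)"
      using Prod.IH(1) ok(1) fv1(2) by blast
    have IH2: "weak m k f2 \<Longrightarrow> \<exists>r. dec (EE S (fpoly f2)) r \<and>
        real r \<le> 2 ^ (s * ps_depth f2) * real (fsize f2) * 2 powr (bY m f2 - k / 2)"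
      using Prod.IH(2) ok(2) fv2(2) by blast
    have dd1: "ps_depth f1 + (if nondisjoint_prod ?f then 1 else 0) \<le> ps_depth ?f"
      by (rule ps_depth_child[OF sub1 lp1])
    have dd2: "ps_depth f2 + (if nondisjoint_prod ?f then 1 else 0) \<le> ps_depth ?f"
      by (rule ps_depth_child[OF sub2 lp2])
    have k1: "\<forall>\<mu>\<in>Poly_Mapping.keys (fpoly f1). Poly_Mapping.keys \<mu> \<subseteq> fvars f1" using keys_fpoly by blast
    have k2: "\<forall>\<mu>\<in>Poly_Mapping.keys (fpoly f2). Poly_Mapping.keys \<mu> \<subseteq> fvars f2" using keys_fpoly by blast
    have s1: "real (fsize f1) \<le> real (fsize ?f)" "real (fsize f2) \<le> real (fsize ?f)" by simp_all
    show ?thesis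
    proof (cases "fvars f1 \<inter> fvars f2 = {}")
      case disj: True
      have nd: "\<not> nondisjoint_prod ?f" using disj by (simp add: nondisjoint_prod_def)
      have d1: "ps_depth f1 \<le> ps_depth ?f" "ps_depth f2 \<le> ps_depth ?f" using dd1 dd2 nd by simp_all
      have beq: "bY m ?f = bY m f1 + bY m f2" by (rule bY_union_eq) (simp_all add: disj)
      show ?thesis
      proof (cases "bY m ?f \<le> 2 * bY m f1")
        case True
        have "weak m k f1" by (rule weak_child[OF Prod.prems(3) nu True sub1 lp1])
        then obtain r1 where r1: "dec (EE S (fpoly f1)) r1"
          "real r1 \<le> 2 ^ (s * ps_depth f1) * real (fsize f1) * 2 powr (bY m f1 - k / 2)"
          using IH1 by blast
        obtain r2 where r2: "dec (EE S (fpoly f2)) r2" "real r2 = 2 powr aY m f2"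
          using dec_triv[OF fv2(2)] by blast
        have r2': "real r2 \<le> 2 powr bY m f2" using r2(2) aY_le_bY[of m f2] by simp
        have "real (r1 * r2) \<le> ?P * real (fsize ?f) * 2 powr (bY m f1 + bY m f2 - k / 2)"
          by (rule disj_arith[OF r1(2) r2']) (simp_all add: pow2_mono d1 s1)
        moreover have "dec (EE S (fpoly ?f)) (r1 * r2)"
          using disj_combine[OF r1(1) r2(1) k1 k2 disj] by simp
        ultimately show ?thesis using beq by auto
      next
        case False
        then have True2: "bY m ?f \<le> 2 * bY m f2" using beq by linarith
        have "weak m k f2" by (rule weak_child[OF Prod.prems(3) nu True2 sub2 lp2])
        then obtain r2 where r2: "dec (EE S (fpoly f2)) r2"
          "real r2 \<le> 2 ^ (s * ps_depth f2) * real (fsize f2) * 2 powr (bY m f2 - k / 2)"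
          using IH2 by blast
        obtain r1 where r1: "dec (EE S (fpoly f1)) r1" "real r1 = 2 powr aY m f1"
          using dec_triv[OF fv1(2)] by blast
        have r1': "real r1 \<le> 2 powr bY m f1" using r1(2) aY_le_bY[of m f1] by simp
        have "real (r2 * r1) \<le> ?P * real (fsize ?f) * 2 powr (bY m f2 + bY m f1 - k / 2)"
          by (rule disj_arith[OF r2(2) r1']) (simp_all add: pow2_mono d1 s1)
        moreover have "dec (EE S (fpoly ?f)) (r1 * r2)"
          using disj_combine[OF r1(1) r2(1) k1 k2 disj] by simp
        ultimately show ?thesis using beq by (auto simp: mult.commute add.commute)
      qed
    next
      case ndisj: False
      have nd: "nondisjoint_prod ?f" using ndisj by (simp add: nondisjoint_prod_def)
      have sp: "sparse_prod s ?f" using ok(3) ndisj by (simp add: disjoint_prod_def)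
      then have sp': "card (Poly_Mapping.keys (fpoly f1)) \<le> 2 ^ s \<or> card (Poly_Mapping.keys (fpoly f2)) \<le> 2 ^ s"
        by (simp add: sparse_prod_def)
      have X0: "0 \<le> ?X" by simp
      show ?thesis
      proof (cases "card (Poly_Mapping.keys (fpoly f1)) \<le> 2 ^ s")
        case True
        obtain r2 where r2: "dec (EE S (fpoly f2)) r2"
            "real r2 \<le> 2 ^ (s * ps_depth f2) * real (fsize f2) * ?X"
          using child_bound[OF IH2 Prod.prems(3) nu sub2 lp2 fv2] by blast
        have "dec (EE S (fpoly f1 * fpoly f2)) (card (Poly_Mapping.keys (fpoly f1)) * r2)"
          by (rule dec_sparse[OF r2(1)])
        moreover have "real (card (Poly_Mapping.keys (fpoly f1)) * r2) \<le> ?P * real (fsize ?f) * ?X"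
        proof (rule sparse_arith[OF _ r2(2) _ s1(2) X0])
          show "real (card (Poly_Mapping.keys (fpoly f1))) \<le> 2 ^ s"
            using True by (metis of_nat_le_iff of_nat_numeral of_nat_power)
          have "ps_depth f2 + 1 \<le> ps_depth ?f" using dd2 nd by simp
          then show "s * (ps_depth f2 + 1) \<le> s * ps_depth ?f" by (rule mult_le_mono2)
        qed simp
        ultimately show ?thesis by auto
      next
        case False
        then have True2: "card (Poly_Mapping.keys (fpoly f2)) \<le> 2 ^ s" using sp' by simp
        obtain r1 where r1: "dec (EE S (fpoly f1)) r1"
            "real r1 \<le> 2 ^ (s * ps_depth f1) * real (fsize f1) * ?X"
          using child_bound[OF IH1 Prod.prems(3) nu sub1 lp1 fv1] by blast
        have "dec (EE S (fpoly f2 * fpoly f1)) (card (Poly_Mapping.keys (fpoly f2)) * r1)"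
          by (rule dec_sparse[OF r1(1)])
        moreover have "real (card (Poly_Mapping.keys (fpoly f2)) * r1) \<le> ?P * real (fsize ?f) * ?X"
        proof (rule sparse_arith[OF _ r1(2) _ s1(1) X0])
          show "real (card (Poly_Mapping.keys (fpoly f2))) \<le> 2 ^ s"
            using True2 by (metis of_nat_le_iff of_nat_numeral of_nat_power)
          have "ps_depth f1 + 1 \<le> ps_depth ?f" using dd1 nd by simp
          then show "s * (ps_depth f1 + 1) \<le> s * ps_depth ?f" by (rule mult_le_mono2)
        qed simp
        ultimately show ?thesis by (auto simp: mult.commute)
      qed
    qed
  qed
qed


theorem lemma8:
  fixes \<Phi> :: "'a::field formula" and m s d :: nat and k :: real and v :: "bool list"
  assumes "fvars \<Phi> \<subseteq> Yset m \<union> Zset m"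
    and "product_sparse s d \<Phi>"
    and "v \<in> positions \<Phi>"
    and "weak m k (subf \<Phi> v)"
  shows "real (maxrank m (fpoly (subf \<Phi> v)))
           \<le> 2 ^ (s * ps_depth (subf \<Phi> v)) * real (fsize (subf \<Phi> v))
             * 2 powr (bY m (subf \<Phi> v) - k / 2)"
proof -
  have ok: "ps_ok s \<Phi>" using assms(2) by (simp add: product_sparse_def ps_ok_def)
  have ok': "ps_ok s (subf \<Phi> v)" by (rule ps_ok_sub[OF ok assms(3)])
  have fv: "fvars (subf \<Phi> v) \<subseteq> Yset m \<union> Zset m" using fvars_subf assms(1) by blast
  show ?thesis by (rule maxrank_bound) (rule main[OF ok' fv assms(4)])
qed

end
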